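(* Under the hypotheses of the previous setting (with $\mathsf{ALG}$ a deterministic first-order algorithm making $T=d^{1+\delta/6-o(1)}$ queries, whose output equals its last query, and which outputs an $\epsilon$-optimal point, $\epsilon=1/(d^2L)$, of the random $F_{\mathbf{A},V}$ with probability at least $2/3$), there exists $i\in[N-1]$ such that, with probability at least $3/5$ over uniform $\mathbf{A}$ and $\mathbf{v}_1,\dots,\mathbf{v}_N$, both $t_i\le t_{i+1}\le T$ and $t_{i+1}-t_i\le 20T/N$.
   Context: $F_{\mathbf{A},V}(\mathbf{x})=\frac{1}{\sqrt dL}\max\{L\|\mathbf{A}\mathbf{x}\|_\infty-1,\max_{i\in[N]}(\langle\mathbf{v}_i,\mathbf{x}\rangle-i\gamma)\}$ on $\mathbb{B}^d$, $\mathbf{A}$ uniform in $\{-1,1\}^{(d/2)\times d}$, $\mathbf{v}_i$ independent uniform in $\frac1{\sqrt d}\{-1,1\}^d$, $\gamma=\log^2 d/d^{\delta/4}$, $N=d^{\delta/6}/\log^4 d$, $L=\exp(\log^5 d)$, $d$ sufficiently large, $\delta\in(0,1)$. Oracle returns $F(\mathbf{x})$ and subgradient: $\pm\mathbf{A}_j/\sqrt d$ for the smallest row index attaining the maximum via the $\|\mathbf{A}\mathbf{x}\|_\infty$ term, otherwise $\mathbf{v}_i/(\sqrt dL)$ for the smallest maximizing $i$. Correlation time $t_i$: first round in which $\mathsf{ALG}$ queries $\mathbf{x}$ with $|\langle\mathbf{x},\mathbf{v}_i\rangle|\ge\gamma/4$ and $\|\mathbf{A}\mathbf{x}\|_\infty\le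 2/L$; $t_i=\infty$ if none. *)

theory Defs
  imports "HOL-Analysis.Analysis"
begin

text \<open>Vectors of R^d are functions nat => real vanishing at indices >= d.
  Matrices A (rows j < d div 2) and the family V (vectors v_1..v_N) are
  functions nat => nat => real vanishing outside their index range.\<close>

type_synonym vec = "nat \<Rightarrow> real"
type_synonym resp = "real \<times> vec"

definition ip :: "nat \<Rightarrow> vec \<Rightarrow> vec \<Rightarrow> real" where
  "ip d x y = (\<Sum>k<d. x k * y k)"

definition unit_ball :: "nat \<Rightarrow> vec set" where
  "unit_ball d = {x. (\<forall>k\<ge>d. x k = 0) \<and> (\<Sum>k<d. (x k)\<^sup>2) \<le> 1}"

definition gam :: "real \<Rightarrow> nat \<Rightarrow> real" where
  "gam \<delta> d = (ln (real d))\<^sup>2 / (real d powr (\<delta> / 4))"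

definition NN :: "real \<Rightarrow> nat \<Rightarrow> nat" where
  "NN \<delta> d = nat \<lfloor>real d powr (\<delta> / 6) / (ln (real d)) ^ 4\<rfloor>"

definition LL :: "nat \<Rightarrow> real" where
  "LL d = exp ((ln (real d)) ^ 5)"

definition epsopt :: "nat \<Rightarrow> real" where
  "epsopt d = 1 / ((real d)\<^sup>2 * LL d)"

definition Amats :: "nat \<Rightarrow> (nat \<Rightarrow> nat \<Rightarrow> real) set" where
  "Amats d = {A. (\<forall>j k. j < d div 2 \<and> k < d \<longrightarrow> A j k \<in> {-1, 1}) \<and>
                 (\<forall>j k. \<not> (j < d div 2 \<and> k < d) \<longrightarrow> A j k = 0)}"

definition Vfams :: "nat \<Rightarrow> nat \<Rightarrow> (nat \<Rightarrow> nat \<Rightarrow> real) set" where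
  "Vfams d N = {V. (\<forall>i k. 1 \<le> i \<and> i \<le> N \<and> k < d \<longrightarrow> V i k \<in> {-1 / sqrt (real d), 1 / sqrt (real d)}) \<and>
                   (\<forall>i k. \<not> (1 \<le> i \<and> i \<le> N \<and> k < d) \<longrightarrow> V i k = 0)}"

definition Omega :: "real \<Rightarrow> nat \<Rightarrow> ((nat \<Rightarrow> nat \<Rightarrow> real) \<times> (nat \<Rightarrow> nat \<Rightarrow> real)) set" where
  "Omega \<delta> d = Amats d \<times> Vfams d (NN \<delta> d)"

definition prob_ev :: "real \<Rightarrow> nat \<Rightarrow> ((nat \<Rightarrow> nat \<Rightarrow> real) \<times> (nat \<Rightarrow> nat \<Rightarrow> real) \<Rightarrow> bool) \<Rightarrow> real" where
  "prob_ev \<delta> d P = real (card {\<omega> \<in> Omega \<delta> d. P \<omega>}) / real (card (Omega \<delta> d))"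

definition Ainf :: "nat \<Rightarrow> (nat \<Rightarrow> nat \<Rightarrow> real) \<Rightarrow> vec \<Rightarrow> real" where
  "Ainf d A x = Max ((\<lambda>j. \<bar>ip d (A j) x\<bar>) ` {..<d div 2})"

definition vmax :: "real \<Rightarrow> nat \<Rightarrow> (nat \<Rightarrow> nat \<Rightarrow> real) \<Rightarrow> vec \<Rightarrow> real" where
  "vmax \<delta> d V x = Max ((\<lambda>i. ip d (V i) x - real i * gam \<delta> d) ` {1..NN \<delta> d})"

definition Fhard :: "real \<Rightarrow> nat \<Rightarrow> (nat \<Rightarrow> nat \<Rightarrow> real) \<Rightarrow> (nat \<Rightarrow> nat \<Rightarrow> real) \<Rightarrow> vec \<Rightarrow> real" where
  "Fhard \<delta> d A V x = (1 / (sqrt (real d) * LL d)) *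
      max (LL d * Ainf d A x - 1) (vmax \<delta> d V x)"

text \<open>Subgradient fo_oracle. Ties between the two terms are resolved in favour of the
  ||Ax||_inf term; the sign is + when the inner product is nonnegative.\<close>
definition subgrad :: "real \<Rightarrow> nat \<Rightarrow> (nat \<Rightarrow> nat \<Rightarrow> real) \<Rightarrow> (nat \<Rightarrow> nat \<Rightarrow> real) \<Rightarrow> vec \<Rightarrow> vec" where
  "subgrad \<delta> d A V x =
    (if LL d * Ainf d A x - 1 \<ge> vmax \<delta> d V x then
       (let j = (LEAST j. j < d div 2 \<and> \<bar>ip d (A j) x\<bar> = Ainf d A x);
            s = (if ip d (A j) x \<ge> 0 then 1 else -1 :: real)
        in (\<lambda>k. s * A j k / sqrt (real d)))
     else
       (let i = (LEAST i. 1 \<le> i \<and> i \<le> NN \<delta> d \<and> ip d (V i) x - real i * gam \<delta> d = vmax \<delta> d V x)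
        in (\<lambda>k. V i k / (sqrt (real d) * LL d))))"

definition fo_oracle :: "real \<Rightarrow> nat \<Rightarrow> (nat \<Rightarrow> nat \<Rightarrow> real) \<Rightarrow> (nat \<Rightarrow> nat \<Rightarrow> real) \<Rightarrow> vec \<Rightarrow> resp" where
  "fo_oracle \<delta> d A V x = (Fhard \<delta> d A V x, subgrad \<delta> d A V x)"

text \<open>A deterministic first-order algorithm maps the history of fo_oracle responses to the
  next query. resp_hist gives the responses to the first n queries.\<close>
fun resp_hist :: "(resp list \<Rightarrow> vec) \<Rightarrow> (vec \<Rightarrow> resp) \<Rightarrow> nat \<Rightarrow> resp list" where
  "resp_hist alg orc 0 = []"
| "resp_hist alg orc (Suc n) = resp_hist alg orc n @ [orc (alg (resp_hist alg orc n))]"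

text \<open>The query of round t (t = 1, 2, ...).\<close>
definition query :: "(resp list \<Rightarrow> vec) \<Rightarrow> (vec \<Rightarrow> resp) \<Rightarrow> nat \<Rightarrow> vec" where
  "query alg orc t = alg (resp_hist alg orc (t - 1))"

definition valid_alg :: "nat \<Rightarrow> (resp list \<Rightarrow> vec) \<Rightarrow> bool" where
  "valid_alg d alg = (\<forall>h. alg h \<in> unit_ball d)"

definition corr_time :: "real \<Rightarrow> nat \<Rightarrow> nat \<Rightarrow> (resp list \<Rightarrow> vec) \<Rightarrow>
    (nat \<Rightarrow> nat \<Rightarrow> real) \<Rightarrow> (nat \<Rightarrow> nat \<Rightarrow> real) \<Rightarrow> nat \<Rightarrow> enat" where
  "corr_time \<delta> d T alg A V i =
    (let C = (\<lambda>t. 1 \<le> t \<and> t \<le> T \<and>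
                  \<bar>ip d (query alg (fo_oracle \<delta> d A V) t) (V i)\<bar> \<ge> gam \<delta> d / 4 \<and>
                  Ainf d A (query alg (fo_oracle \<delta> d A V) t) \<le> 2 / LL d)
     in if \<exists>t. C t then enat (LEAST t. C t) else \<infinity>)"

definition eps_optimal_out :: "real \<Rightarrow> nat \<Rightarrow> nat \<Rightarrow> (resp list \<Rightarrow> vec) \<Rightarrow>
    (nat \<Rightarrow> nat \<Rightarrow> real) \<Rightarrow> (nat \<Rightarrow> nat \<Rightarrow> real) \<Rightarrow> bool" where
  "eps_optimal_out \<delta> d T alg A V =
    (\<forall>y \<in> unit_ball d. Fhard \<delta> d A V (query alg (fo_oracle \<delta> d A V) T) \<le> Fhard \<delta> d A V y + epsopt d)"

end

theory Submission
  imports Defs "HOL-Real_Asymp.Real_Asymp" "HOL-Probability.Hoeffding"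
begin

lemma cosh_le_exp_sq: "exp a + exp (-a) \<le> 2 * exp (a\<^sup>2 / 2)" for a :: real
proof -
  have key: "exp b + exp (-b) \<le> 2 * exp (b\<^sup>2 / 2)" if "b \<ge> 0" for b :: real
  proof -
    have "-(2*b) * (1/2) + ln (1 + (1/2) * (exp (2*b) - 1)) \<le> (2*b)\<^sup>2 / 8"
      using Hoeffdings_lemma_aux[of "2*b" "1/2"] that by simp
    hence "ln ((1 + exp (2*b)) / 2) \<le> b + b\<^sup>2/2"
      by (simp add: field_simps power2_eq_square)
    hence "(1 + exp (2*b)) / 2 \<le> exp (b + b\<^sup>2/2)"
      by (smt (verit) exp_gt_zero exp_le_cancel_iff exp_ln)
    hence "exp (-b) * ((1 + exp (2*b)) / 2) \<le> exp (-b) * exp (b + b\<^sup>2/2)"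
      by (intro mult_left_mono) auto
    moreover have "exp (-b) * ((1 + exp (2*b)) / 2) = (exp b + exp (-b)) / 2"
      by (simp add: field_simps flip: exp_add) 
    moreover have "exp (-b) * exp (b + b\<^sup>2/2) = exp (b\<^sup>2/2)"
      by (simp flip: exp_add)
    ultimately show ?thesis by simp
  qed
  show ?thesis
  proof (cases "a \<ge> 0")
    case True thus ?thesis using key by blast
  next
    case False thus ?thesis using key[of "-a"] by simp
  qed
qed

definition cube :: "nat \<Rightarrow> real \<Rightarrow> vec set" where
  "cube n c = {u. (\<forall>k<n. u k \<in> {-c, c}) \<and> (\<forall>k\<ge>n. u k = 0)}"

lemma cube_0: "cube 0 c = {\<lambda>k. 0}"
  by (auto simp: cube_def)

lemma cube_Suc: "cube (Suc n) c = (\<lambda>(u,a). u(n:=a)) ` (cube n c \<times> {-c,c})"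
proof (intro equalityI subsetI)
  fix w assume w: "w \<in> cube (Suc n) c"
  have "w(n:=0) \<in> cube n c" using w by (auto simp: cube_def)
  moreover have "w n \<in> {-c,c}" using w by (auto simp: cube_def)
  moreover have "w = (\<lambda>(u,a). u(n:=a)) (w(n:=0), w n)" by auto
  ultimately show "w \<in> (\<lambda>(u,a). u(n:=a)) ` (cube n c \<times> {-c,c})" by blast
next
  fix w assume "w \<in> (\<lambda>(u,a). u(n:=a)) ` (cube n c \<times> {-c,c})"
  then obtain u a where "u \<in> cube n c" "a \<in> {-c,c}" "w = u(n:=a)" by auto
  thus "w \<in> cube (Suc n) c" by (auto simp: cube_def less_Suc_eq)
qed

lemma inj_cube_Suc: "inj_on (\<lambda>(u,a). u(n:=a)) (cube n c \<times> {-c,c})"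
proof (rule inj_onI, clarify)
  fix u a u' a'
  assume "u \<in> cube n c" "u' \<in> cube n c" and e: "u(n:=a) = u'(n:=a')"
  hence "u n = 0" "u' n = 0" by (auto simp: cube_def)
  have "a = a'" using fun_cong[OF e, of n] by simp
  moreover have "u = u'"
  proof
    fix k show "u k = u' k"
      using fun_cong[OF e, of k] \<open>u n = 0\<close> \<open>u' n = 0\<close> by (cases "k = n") auto
  qed
  ultimately show "u = u' \<and> a = a'" by simp
qed

lemma finite_cube [simp]: "finite (cube n c)"
  by (induction n) (auto simp: cube_0 cube_Suc)

lemma sum_cube_Suc:
  assumes "c \<noteq> 0"
  shows "sum g (cube (Suc n) c) = (\<Sum>u\<in>cube n c. g (u(n:=c)) + g (u(n:=-c)))"
proof -
  have "sum g (cube (Suc n) c) = (\<Sum>p\<in>cube n c \<times> {-c,c}. g ((\<lambda>(u,a). u(n:=a)) p))"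
    unfolding cube_Suc by (rule sum.reindex[OF inj_cube_Suc, unfolded comp_def])
  also have "\<dots> = (\<Sum>u\<in>cube n c. \<Sum>a\<in>{-c,c}. g (u(n:=a)))"
    by (simp add: sum.cartesian_product split_def)
  also have "\<dots> = (\<Sum>u\<in>cube n c. g (u(n:=c)) + g (u(n:=-c)))"
    using assms by (intro sum.cong refl) (auto simp: add.commute)
  finally show ?thesis .
qed

lemma card_cube: "c \<noteq> 0 \<Longrightarrow> card (cube n c) = 2^n"
proof (induction n)
  case 0 thus ?case by (simp add: cube_0)
next
  case (Suc n)
  have "card (cube (Suc n) c) = card (cube n c \<times> {-c,c})"
    unfolding cube_Suc by (rule card_image[OF inj_cube_Suc])
  also have "\<dots> = 2^n * 2" using Suc by (simp add: card_cartesian_product)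
  finally show ?case by simp
qed

lemma prod_cube:
  fixes f :: "nat \<Rightarrow> real \<Rightarrow> real"
  assumes "c \<noteq> 0"
  shows "(\<Sum>u\<in>cube n c. \<Prod>k<n. f k (u k)) = (\<Prod>k<n. f k c + f k (-c))"
proof (induction n)
  case 0 thus ?case by (simp add: cube_0)
next
  case (Suc n)
  have e: "(\<Prod>k<Suc n. f k ((u(n:=a)) k)) = (\<Prod>k<n. f k (u k)) * f n a" for u a
  proof -
    have "(\<Prod>k<n. f k ((u(n:=a)) k)) = (\<Prod>k<n. f k (u k))"
      by (intro prod.cong) auto
    thus ?thesis by simp
  qed
  have "(\<Sum>u\<in>cube (Suc n) c. \<Prod>k<Suc n. f k (u k))
      = (\<Sum>u\<in>cube n c. (\<Prod>k<n. f k (u k)) * f n c + (\<Prod>k<n. f k (u k)) * f n (-c))"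
    unfolding sum_cube_Suc[OF assms] e by simp
  also have "\<dots> = (\<Sum>u\<in>cube n c. (\<Prod>k<n. f k (u k))) * (f n c + f n (-c))"
    by (simp only: sum.distrib distrib_left sum_distrib_right)
  also have "\<dots> = (\<Prod>k<n. f k c + f k (-c)) * (f n c + f n (-c))"
    by (simp add: Suc)
  finally show ?case by simp
qed

lemma cube_mgf:
  assumes "c \<noteq> 0"
  shows "(\<Sum>u\<in>cube n c. exp (l * (\<Sum>k<n. x k * u k)))
        \<le> 2^n * exp (l\<^sup>2 * c\<^sup>2 * (\<Sum>k<n. (x k)\<^sup>2) / 2)"
proof -
  have "(\<Sum>u\<in>cube n c. exp (l * (\<Sum>k<n. x k * u k)))
      = (\<Sum>u\<in>cube n c. \<Prod>k<n. exp (l * x k * u k))"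
    by (simp add: exp_sum sum_distrib_left mult.assoc)
  also have "\<dots> = (\<Prod>k<n. exp (l * x k * c) + exp (l * x k * (-c)))"
    by (rule prod_cube[OF assms])
  also have "\<dots> \<le> (\<Prod>k<n. 2 * exp ((l * x k * c)\<^sup>2 / 2))"
    by (intro prod_mono) (use cosh_le_exp_sq in \<open>auto simp: add_nonneg_nonneg\<close>)
  also have "\<dots> = 2^n * exp (\<Sum>k<n. (l * x k * c)\<^sup>2 / 2)"
    by (simp add: prod.distrib exp_sum)
  also have "(\<Sum>k<n. (l * x k * c)\<^sup>2 / 2) = l\<^sup>2 * c\<^sup>2 * (\<Sum>k<n. (x k)\<^sup>2) / 2"
    by (simp add: sum_distrib_left sum_divide_distrib power_mult_distrib algebra_simps)
  finally show ?thesis .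
qed

lemma cube_tail_one:
  assumes "c \<noteq> 0" "t > 0" "s > 0" "(\<Sum>k<n. (x k)\<^sup>2) \<le> s"
  shows "real (card {u\<in>cube n c. (\<Sum>k<n. x k * u k) \<ge> t}) \<le> 2^n * exp (- t\<^sup>2 / (2 * c\<^sup>2 * s))"
proof -
  define l where "l = t / (c\<^sup>2 * s)"
  have l0: "l > 0" using assms by (simp add: l_def)
  let ?S = "{u\<in>cube n c. (\<Sum>k<n. x k * u k) \<ge> t}"
  have "real (card ?S) * exp (l * t) = (\<Sum>u\<in>?S. exp (l * t))" by simp
  also have "\<dots> \<le> (\<Sum>u\<in>?S. exp (l * (\<Sum>k<n. x k * u k)))"
    by (intro sum_mono) (use l0 in auto)
  also have "\<dots> \<le> (\<Sum>u\<in>cube n c. exp (l * (\<Sum>k<n. x k * u k)))"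
    by (intro sum_mono2) auto
  also have "\<dots> \<le> 2^n * exp (l\<^sup>2 * c\<^sup>2 * (\<Sum>k<n. (x k)\<^sup>2) / 2)"
    by (rule cube_mgf[OF assms(1)])
  also have "\<dots> \<le> 2^n * exp (l\<^sup>2 * c\<^sup>2 * s / 2)"
  proof -
    have "l\<^sup>2 * c\<^sup>2 * (\<Sum>k<n. (x k)\<^sup>2) \<le> l\<^sup>2 * c\<^sup>2 * s"
      by (rule mult_left_mono[OF assms(4)]) simp
    thus ?thesis by simp
  qed
  finally have "real (card ?S) * exp (l * t) \<le> 2^n * exp (l\<^sup>2 * c\<^sup>2 * s / 2)" .
  hence "real (card ?S) \<le> 2^n * exp (l\<^sup>2 * c\<^sup>2 * s / 2) / exp (l * t)"
    by (simp add: field_simps)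
  also have "2^n * exp (l\<^sup>2 * c\<^sup>2 * s / 2) / exp (l * t) = 2^n * exp (l\<^sup>2 * c\<^sup>2 * s / 2 - l * t)"
    by (simp add: exp_diff)
  also have "l\<^sup>2 * c\<^sup>2 * s / 2 - l * t = - t\<^sup>2 / (2 * c\<^sup>2 * s)"
    using assms by (simp add: l_def field_simps power2_eq_square)
  finally show ?thesis .
qed

lemma cube_tail:
  assumes "c \<noteq> 0" "t > 0" "s > 0" "(\<Sum>k<n. (x k)\<^sup>2) \<le> s"
  shows "real (card {u\<in>cube n c. \<bar>\<Sum>k<n. x k * u k\<bar> \<ge> t}) \<le> 2 * 2^n * exp (- t\<^sup>2 / (2 * c\<^sup>2 * s))"
proof -
  have "{u\<in>cube n c. \<bar>\<Sum>k<n. x k * u k\<bar> \<ge> t} \<subseteq>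
        {u\<in>cube n c. (\<Sum>k<n. x k * u k) \<ge> t} \<union> {u\<in>cube n c. (\<Sum>k<n. (- x k) * u k) \<ge> t}"
    by (auto simp: sum_negf)
  hence "card {u\<in>cube n c. \<bar>\<Sum>k<n. x k * u k\<bar> \<ge> t} \<le>
        card ({u\<in>cube n c. (\<Sum>k<n. x k * u k) \<ge> t} \<union> {u\<in>cube n c. (\<Sum>k<n. (- x k) * u k) \<ge> t})"
    by (intro card_mono) auto
  also have "\<dots> \<le> card {u\<in>cube n c. (\<Sum>k<n. x k * u k) \<ge> t} + card {u\<in>cube n c. (\<Sum>k<n. (- x k) * u k) \<ge> t}"
    by (rule card_Un_le)
  finally have "card {u\<in>cube n c. \<bar>\<Sum>k<n. x k * u k\<bar> \<ge> t} \<le>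
        card {u\<in>cube n c. (\<Sum>k<n. x k * u k) \<ge> t} + card {u\<in>cube n c. (\<Sum>k<n. (- x k) * u k) \<ge> t}" .
  hence "real (card {u\<in>cube n c. \<bar>\<Sum>k<n. x k * u k\<bar> \<ge> t}) \<le>
        real (card {u\<in>cube n c. (\<Sum>k<n. x k * u k) \<ge> t}) + real (card {u\<in>cube n c. (\<Sum>k<n. (- x k) * u k) \<ge> t})"
    by linarith
  also have "\<dots> \<le> 2^n * exp (- t\<^sup>2 / (2 * c\<^sup>2 * s)) + 2^n * exp (- t\<^sup>2 / (2 * c\<^sup>2 * s))"
    by (intro add_mono cube_tail_one) (use assms in auto)
  finally show ?thesis by simp
qed

lemma cube_flip_zero:
  fixes g :: "vec \<Rightarrow> real"
  assumes "j < n" and neg: "\<And>u. u \<in> cube n c \<Longrightarrow> g (u(j := - u j)) = - g u"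
  shows "(\<Sum>u\<in>cube n c. g u) = 0"
proof -
  define fl where "fl = (\<lambda>u::vec. u(j := - u j))"
  have flfl: "fl (fl u) = u" for u by (auto simp: fl_def)
  have inj: "inj_on fl (cube n c)" by (metis flfl inj_onI)
  have flc: "fl u \<in> cube n c" if "u \<in> cube n c" for u
  proof -
    from that have a: "\<forall>k<n. u k \<in> {-c, c}" "\<forall>k\<ge>n. u k = 0" by (auto simp: cube_def)
    show "fl u \<in> cube n c" unfolding cube_def mem_Collect_eq
    proof (intro conjI allI impI)
      fix k assume "k<n" thus "fl u k \<in> {-c,c}" using a(1) by (cases "k=j") (auto simp: fl_def)
    next
      fix k assume "n \<le> k" thus "fl u k = 0" using a(2) assms(1) by (auto simp: fl_def)
    qed
  qed
  have im: "fl ` cube n c = cube n c"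
  proof
    show "fl ` cube n c \<subseteq> cube n c" using flc by auto
    show "cube n c \<subseteq> fl ` cube n c"
    proof
      fix u assume "u \<in> cube n c"
      hence "fl u \<in> cube n c" by (rule flc)
      thus "u \<in> fl ` cube n c" by (metis flfl imageI)
    qed
  qed
  have "(\<Sum>u\<in>cube n c. g u) = (\<Sum>u\<in>fl ` cube n c. g u)" by (simp add: im)
  also have "\<dots> = (\<Sum>u\<in>cube n c. g (fl u))" by (rule sum.reindex[OF inj, unfolded comp_def])
  also have "\<dots> = - (\<Sum>u\<in>cube n c. g u)" using neg by (simp add: fl_def sum_negf)
  finally show ?thesis by simp
qed

lemma cube_sq: "u \<in> cube n c \<Longrightarrow> k < n \<Longrightarrow> u k * u k = c * c"
  by (auto simp: cube_def)

lemma cube_four: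
  assumes "c \<noteq> 0" "k < l" "l < n" "m < p" "p < n"
  shows "(\<Sum>u\<in>cube n c. u k * u l * (u m * u p)) = (if k = m \<and> l = p then c^4 * 2^n else 0)"
proof (cases "k = m \<and> l = p")
  case True
  have "(\<Sum>u\<in>cube n c. u k * u l * (u m * u p)) = (\<Sum>u\<in>cube n c. c^4)"
  proof (intro sum.cong refl)
    fix u assume u: "u \<in> cube n c"
    have "u k * u l * (u m * u p) = (u k * u k) * (u l * u l)" using True by simp
    also have "\<dots> = c^4" using cube_sq[OF u, of k] cube_sq[OF u, of l] assms
      by (simp add: power4_eq_xxxx)
    finally show "u k * u l * (u m * u p) = c^4" .
  qed
  also have "\<dots> = c^4 * 2^n" using card_cube[OF assms(1)] by simp
  finally show ?thesis using True by simp
next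
  case False
  show ?thesis
  proof (cases "k \<noteq> m \<and> k \<noteq> p")
    case True
    have "(\<Sum>u\<in>cube n c. u k * u l * (u m * u p)) = 0"
      by (rule cube_flip_zero[of k]) (use True assms in auto)
    thus ?thesis using False by auto
  next
    case kk: False
    have lnot: "l \<noteq> m \<and> l \<noteq> p" using kk False assms by auto
    have "(\<Sum>u\<in>cube n c. u k * u l * (u m * u p)) = 0"
      by (rule cube_flip_zero[of l]) (use lnot assms in auto)
    thus ?thesis using False by auto
  qed
qed

lemma sum_sq_split:
  fixes F :: "nat \<Rightarrow> nat \<Rightarrow> real"
  assumes sym: "\<And>k l. F k l = F l k"
  shows "(\<Sum>k<n. \<Sum>l<n. F k l) = (\<Sum>k<n. F k k) + 2 * (\<Sum>l<n. \<Sum>k<l. F k l)"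
proof (induction n)
  case 0 thus ?case by simp
next
  case (Suc n)
  have "(\<Sum>k<Suc n. \<Sum>l<Suc n. F k l) = (\<Sum>k<n. \<Sum>l<n. F k l) + (\<Sum>k<n. F k n) + (\<Sum>l<n. F n l) + F n n"
    by (simp add: sum.distrib)
  also have "(\<Sum>l<n. F n l) = (\<Sum>k<n. F k n)" using sym by simp
  finally show ?case using Suc by simp
qed

lemma delta_pairs:
  fixes h :: "nat \<Rightarrow> nat \<Rightarrow> real"
  assumes "k < l" "l < n"
  shows "(\<Sum>p<n. \<Sum>m<p. h m p * (if k = m \<and> l = p then C else 0)) = h k l * C"
proof -
  have "(\<Sum>p<n. \<Sum>m<p. h m p * (if k = m \<and> l = p then C else 0))
      = (\<Sum>p<n. if p = l then (\<Sum>m<p. h m p * (if k = m then C else 0)) else 0)"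
    by (intro sum.cong refl) auto
  also have "\<dots> = (\<Sum>m<l. h m l * (if k = m then C else 0))" using assms by simp
  also have "\<dots> = (\<Sum>m<l. if m = k then h m l * C else 0)" by (intro sum.cong refl) auto
  also have "\<dots> = h k l * C" using assms by simp
  finally show ?thesis .
qed

lemma sq_expand:
  fixes F :: "nat \<Rightarrow> nat \<Rightarrow> real"
  shows "(\<Sum>l<n. \<Sum>k<l. F k l)\<^sup>2 = (\<Sum>l<n. \<Sum>k<l. \<Sum>p<n. \<Sum>m<p. F k l * F m p)"
  by (simp only: power2_eq_square sum_product) (intro sum.cong refl sum.swap)

lemma swap4:
  fixes G :: "vec \<Rightarrow> nat \<Rightarrow> nat \<Rightarrow> nat \<Rightarrow> nat \<Rightarrow> real"
  shows "(\<Sum>u\<in>S. \<Sum>l<n. \<Sum>k<l. \<Sum>p<n. \<Sum>m<p. G u k l m p)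
       = (\<Sum>l<n. \<Sum>k<l. \<Sum>p<n. \<Sum>m<p. \<Sum>u\<in>S. G u k l m p)"
proof -
  have "(\<Sum>u\<in>S. \<Sum>l<n. \<Sum>k<l. \<Sum>p<n. \<Sum>m<p. G u k l m p)
      = (\<Sum>l<n. \<Sum>u\<in>S. \<Sum>k<l. \<Sum>p<n. \<Sum>m<p. G u k l m p)" by (rule sum.swap)
  also have "\<dots> = (\<Sum>l<n. \<Sum>k<l. \<Sum>u\<in>S. \<Sum>p<n. \<Sum>m<p. G u k l m p)"
    by (intro sum.cong refl sum.swap)
  also have "\<dots> = (\<Sum>l<n. \<Sum>k<l. \<Sum>p<n. \<Sum>u\<in>S. \<Sum>m<p. G u k l m p)"
    by (intro sum.cong refl sum.swap)
  also have "\<dots> = (\<Sum>l<n. \<Sum>k<l. \<Sum>p<n. \<Sum>m<p. \<Sum>u\<in>S. G u k l m p)"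
    by (intro sum.cong refl sum.swap)
  finally show ?thesis .
qed

lemma Y_second_moment:
  fixes Q :: "nat \<Rightarrow> nat \<Rightarrow> real"
  assumes c: "c \<noteq> 0"
  shows "(\<Sum>u\<in>cube n c. (\<Sum>l<n. \<Sum>k<l. Q k l * u k * u l)\<^sup>2)
        = c^4 * 2^n * (\<Sum>l<n. \<Sum>k<l. (Q k l)\<^sup>2)"
proof -
  have "(\<Sum>u\<in>cube n c. (\<Sum>l<n. \<Sum>k<l. Q k l * u k * u l)\<^sup>2)
      = (\<Sum>u\<in>cube n c. \<Sum>l<n. \<Sum>k<l. \<Sum>p<n. \<Sum>m<p. (Q k l * Q m p) * (u k * u l * (u m * u p)))"
    unfolding sq_expand by (intro sum.cong refl) (simp add: algebra_simps)
  also have "\<dots> = (\<Sum>l<n. \<Sum>k<l. \<Sum>p<n. \<Sum>m<p. \<Sum>u\<in>cube n c. (Q k l * Q m p) * (u k * u l * (u m * u p)))"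
    by (rule swap4)
  also have "\<dots> = (\<Sum>l<n. \<Sum>k<l. \<Sum>p<n. \<Sum>m<p. (Q k l * Q m p) * (if k = m \<and> l = p then c^4 * 2^n else 0))"
    by (intro sum.cong refl) (simp add: sum_distrib_left[symmetric] cube_four[OF c])
  also have "\<dots> = (\<Sum>l<n. \<Sum>k<l. Q k l * (\<Sum>p<n. \<Sum>m<p. Q m p * (if k = m \<and> l = p then c^4 * 2^n else 0)))"
    by (simp add: sum_distrib_left mult.assoc)
  also have "\<dots> = (\<Sum>l<n. \<Sum>k<l. Q k l * (Q k l * (c^4 * 2^n)))"
    by (intro sum.cong refl) (simp add: delta_pairs)
  also have "\<dots> = c^4 * 2^n * (\<Sum>l<n. \<Sum>k<l. (Q k l)\<^sup>2)"
    by (simp add: sum_distrib_left power2_eq_square algebra_simps)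
  finally show ?thesis .
qed

lemma swap3: "(\<Sum>a\<in>A. \<Sum>b\<in>B. \<Sum>c\<in>C. f a b c) = (\<Sum>b\<in>B. \<Sum>c\<in>C. \<Sum>a\<in>A. (f a b c :: real))"
proof -
  have "(\<Sum>a\<in>A. \<Sum>b\<in>B. \<Sum>c\<in>C. f a b c) = (\<Sum>b\<in>B. \<Sum>a\<in>A. \<Sum>c\<in>C. f a b c)" by (rule sum.swap)
  also have "\<dots> = (\<Sum>b\<in>B. \<Sum>c\<in>C. \<Sum>a\<in>A. f a b c)" by (intro sum.cong refl sum.swap)
  finally show ?thesis .
qed

lemma frob:
  fixes q :: "nat \<Rightarrow> vec"
  assumes on: "\<And>r s. r < R \<Longrightarrow> s < R \<Longrightarrow> ip n (q r) (q s) = (if r = s then 1 else 0)"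
  shows "(\<Sum>k<n. \<Sum>l<n. (\<Sum>r<R. q r k * q r l)\<^sup>2) = real R"
proof -
  have "(\<Sum>k<n. \<Sum>l<n. (\<Sum>r<R. q r k * q r l)\<^sup>2)
      = (\<Sum>k<n. \<Sum>l<n. \<Sum>r<R. \<Sum>s<R. (q r k * q r l) * (q s k * q s l))"
    by (simp only: power2_eq_square sum_product)
  also have "\<dots> = (\<Sum>k<n. \<Sum>r<R. \<Sum>s<R. \<Sum>l<n. (q r k * q r l) * (q s k * q s l))"
    by (intro sum.cong refl swap3)
  also have "\<dots> = (\<Sum>r<R. \<Sum>s<R. \<Sum>k<n. \<Sum>l<n. (q r k * q r l) * (q s k * q s l))"
    by (rule swap3)
  also have "\<dots> = (\<Sum>r<R. \<Sum>s<R. (\<Sum>k<n. q r k * q s k) * (\<Sum>l<n. q r l * q s l))"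
    by (simp add: sum_product algebra_simps)
  also have "\<dots> = (\<Sum>r<R. \<Sum>s<R. (if r = s then 1 else 0))"
    using on by (intro sum.cong refl) (simp add: ip_def)
  also have "\<dots> = real R" by simp
  finally show ?thesis .
qed
lemma qf_expand:
  fixes q :: "nat \<Rightarrow> vec"
  shows "(\<Sum>r<R. (ip n (q r) u)\<^sup>2) = (\<Sum>k<n. \<Sum>l<n. (\<Sum>r<R. q r k * q r l) * u k * u l)"
proof -
  have "(\<Sum>r<R. (ip n (q r) u)\<^sup>2) = (\<Sum>r<R. \<Sum>k<n. \<Sum>l<n. (q r k * u k) * (q r l * u l))"
    by (simp only: ip_def power2_eq_square sum_product)
  also have "\<dots> = (\<Sum>k<n. \<Sum>l<n. \<Sum>r<R. (q r k * u k) * (q r l * u l))"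
    by (rule swap3)
  also have "\<dots> = (\<Sum>k<n. \<Sum>l<n. (\<Sum>r<R. q r k * q r l) * u k * u l)"
    by (simp add: sum_distrib_left sum_distrib_right algebra_simps)
  finally show ?thesis .
qed

lemma qf_tail:
  fixes q :: "nat \<Rightarrow> vec"
  assumes on: "\<And>r s. r < R \<Longrightarrow> s < R \<Longrightarrow> ip n (q r) (q s) = (if r = s then 1 else 0)"
    and n: "n > 0" and R: "2 * R \<le> n" and c: "c\<^sup>2 = 1 / real n"
  shows "real (card {u\<in>cube n c. (\<Sum>r<R. (ip n (q r) u)\<^sup>2) > 3/4}) \<le> 16 / real n * 2^n"
proof -
  define Q where "Q k l = (\<Sum>r<R. q r k * q r l)" for k l
  define Y where "Y u = (\<Sum>l<n. \<Sum>k<l. Q k l * u k * u l)" for u :: vec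
  have c0: "c \<noteq> 0" using c n by auto
  have Qsym: "Q k l = Q l k" for k l by (simp add: Q_def mult.commute)
  have diag: "(\<Sum>k<n. Q k k) = real R"
  proof -
    have "(\<Sum>k<n. Q k k) = (\<Sum>r<R. ip n (q r) (q r))"
      unfolding Q_def ip_def by (rule sum.swap)
    also have "\<dots> = real R" using on by simp
    finally show ?thesis .
  qed
  have form: "(\<Sum>r<R. (ip n (q r) u)\<^sup>2) = c\<^sup>2 * real R + 2 * Y u" if u: "u \<in> cube n c" for u
  proof -
    have "(\<Sum>r<R. (ip n (q r) u)\<^sup>2) = (\<Sum>k<n. \<Sum>l<n. Q k l * u k * u l)"
      unfolding qf_expand Q_def ..
    also have "\<dots> = (\<Sum>k<n. Q k k * u k * u k) + 2 * Y u"
      unfolding Y_def by (rule sum_sq_split) (simp add: Qsym)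
    also have "(\<Sum>k<n. Q k k * u k * u k) = (\<Sum>k<n. c\<^sup>2 * Q k k)"
      using cube_sq[OF u] by (intro sum.cong refl) (simp add: power2_eq_square mult.assoc)
    also have "\<dots> = c\<^sup>2 * real R" by (simp add: sum_distrib_left[symmetric] diag)
    finally show ?thesis .
  qed
  have pairs: "(\<Sum>l<n. \<Sum>k<l. (Q k l)\<^sup>2) \<le> real R / 2"
  proof -
    have "(\<Sum>k<n. \<Sum>l<n. (Q k l)\<^sup>2) = (\<Sum>k<n. (Q k k)\<^sup>2) + 2 * (\<Sum>l<n. \<Sum>k<l. (Q k l)\<^sup>2)"
      by (rule sum_sq_split) (simp add: Qsym)
    moreover have "(\<Sum>k<n. \<Sum>l<n. (Q k l)\<^sup>2) = real R" unfolding Q_def by (rule frob[OF on])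
    moreover have "(\<Sum>k<n. (Q k k)\<^sup>2) \<ge> 0" by (intro sum_nonneg) auto
    ultimately show ?thesis by linarith
  qed
  have mom: "(\<Sum>u\<in>cube n c. (Y u)\<^sup>2) \<le> c^4 * 2^n * (real R / 2)"
  proof -
    have "(\<Sum>u\<in>cube n c. (Y u)\<^sup>2) = c^4 * 2^n * (\<Sum>l<n. \<Sum>k<l. (Q k l)\<^sup>2)"
      unfolding Y_def by (rule Y_second_moment[OF c0])
    also have "\<dots> \<le> c^4 * 2^n * (real R / 2)"
      by (intro mult_left_mono pairs) auto
    finally show ?thesis .
  qed
  let ?S = "{u\<in>cube n c. (\<Sum>r<R. (ip n (q r) u)\<^sup>2) > 3/4}"
  have Yb: "Y u > 1/8" if "u \<in> ?S" for u
  proof -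
    have "real (2*R) \<le> real n" using R by (simp only: of_nat_le_iff)
    hence "2 * real R \<le> real n" by simp
    hence "c\<^sup>2 * (2 * real R) \<le> c\<^sup>2 * real n" by (intro mult_left_mono) auto
    also have "c\<^sup>2 * real n = 1" using c n by simp
    finally have "c\<^sup>2 * real R \<le> 1/2" by simp
    thus ?thesis using that form[of u] by auto
  qed
  have "real (card ?S) * (1/64) = (\<Sum>u\<in>?S. 1/64)" by simp
  also have "\<dots> \<le> (\<Sum>u\<in>?S. (Y u)\<^sup>2)"
  proof (intro sum_mono)
    fix u assume "u \<in> ?S"
    hence "Y u > 1/8" by (rule Yb)
    hence "(1/8)\<^sup>2 \<le> (Y u)\<^sup>2" by (intro power_mono) auto
    thus "1/64 \<le> (Y u)\<^sup>2" by (simp add: power2_eq_square)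
  qed
  also have "\<dots> \<le> (\<Sum>u\<in>cube n c. (Y u)\<^sup>2)" by (intro sum_mono2) auto
  also have "\<dots> \<le> c^4 * 2^n * (real R / 2)" by (rule mom)
  also have "c^4 = 1 / (real n)\<^sup>2" using c by (metis power2_eq_square power_divide power4_eq_xxxx power_one mult.assoc)
  finally have "real (card ?S) \<le> 64 * (1 / (real n)\<^sup>2 * 2^n * (real R / 2))" by simp
  also have "\<dots> \<le> 16 / real n * 2^n"
  proof -
    have "real R \<le> real n / 2" using R by simp
    hence "64 * (1 / (real n)\<^sup>2 * 2^n * (real R / 2)) \<le> 64 * (1 / (real n)\<^sup>2 * 2^n * (real n / 4))"
      by (intro mult_left_mono) auto
    also have "\<dots> = 16 / real n * 2^n" using n by (simp add: field_simps power2_eq_square)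
    finally show ?thesis .
  qed
  finally show ?thesis .
qed

lemma ip_comb:
  assumes "\<And>k. k < n \<Longrightarrow> x k = a k - (\<Sum>r<m. c r * g r k)"
  shows "ip n x h = ip n a h - (\<Sum>r<m. c r * ip n (g r) h)"
proof -
  have "ip n x h = (\<Sum>k<n. a k * h k - (\<Sum>r<m. c r * (g r k * h k)))"
    unfolding ip_def
  proof (intro sum.cong refl)
    fix k assume "k \<in> {..<n}"
    hence "x k = a k - (\<Sum>r<m. c r * g r k)" using assms by simp
    thus "x k * h k = a k * h k - (\<Sum>r<m. c r * (g r k * h k))"
      by (subst \<open>x k = _\<close>) (simp add: sum_distrib_left sum_distrib_right algebra_simps)
  qed
  also have "\<dots> = ip n a h - (\<Sum>k<n. \<Sum>r<m. c r * (g r k * h k))"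
    by (simp add: ip_def sum_subtractf)
  also have "(\<Sum>k<n. \<Sum>r<m. c r * (g r k * h k)) = (\<Sum>r<m. c r * ip n (g r) h)"
    unfolding ip_def by (subst sum.swap) (simp add: sum_distrib_left)
  finally show ?thesis .
qed

lemma ip_span:
  assumes "\<And>k. k < n \<Longrightarrow> x k = (\<Sum>r<m. c r * g r k)"
  shows "ip n x h = (\<Sum>r<m. c r * ip n (g r) h)"
  using ip_comb[where n=n and x=x and a="\<lambda>k. 0" and m=m and c="\<lambda>r. - c r" and g=g and h=h] assms
  by (simp add: ip_def sum_negf)

lemma ip_sym: "ip n x y = ip n y x" by (simp add: ip_def mult.commute)

lemma ip_self_nonneg: "ip n x x \<ge> 0" by (simp add: ip_def sum_nonneg)

lemma ip_self_zero: "ip n x x = 0 \<Longrightarrow> k < n \<Longrightarrow> x k = 0"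
  unfolding ip_def by (subst (asm) sum_nonneg_eq_0_iff) auto

lemma ip_scale: "ip n (\<lambda>k. x k / s) y = ip n x y / s"
  by (simp add: ip_def sum_divide_distrib)

lemma ip_scale2: "ip n y (\<lambda>k. x k / s) = ip n y x / s"
  by (simp add: ip_def sum_divide_distrib)

fun gs :: "nat \<Rightarrow> vec list \<Rightarrow> vec list" where
  "gs n [] = []"
| "gs n (a # as) = (let qs = gs n as;
      w = (\<lambda>k. if k < n then a k - (\<Sum>r<length qs. ip n a (qs!r) * (qs!r) k) else 0)
    in if ip n w w = 0 then qs else (\<lambda>k. w k / sqrt (ip n w w)) # qs)"

definition orthon :: "nat \<Rightarrow> vec list \<Rightarrow> bool" where
  "orthon n qs = (\<forall>r<length qs. \<forall>s<length qs. ip n (qs!r) (qs!s) = (if r = s then 1 else 0))"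

definition spans :: "nat \<Rightarrow> vec list \<Rightarrow> vec \<Rightarrow> bool" where
  "spans n qs a = (\<forall>k<n. a k = (\<Sum>r<length qs. ip n a (qs!r) * (qs!r) k))"

lemma gs_props: "orthon n (gs n as) \<and> length (gs n as) \<le> length as \<and> (\<forall>a\<in>set as. spans n (gs n as) a)"
proof (induction as)
  case Nil thus ?case by (simp add: orthon_def)
next
  case (Cons a as)
  define qs where "qs = gs n as"
  define w where "w = (\<lambda>k. if k < n then a k - (\<Sum>r<length qs. ip n a (qs!r) * (qs!r) k) else 0)"
  have on: "orthon n qs" and len: "length qs \<le> length as" and sp: "\<forall>b\<in>set as. spans n qs b"
    using Cons.IH by (auto simp: qs_def)
  have g: "gs n (a # as) = (if ip n w w = 0 then qs else (\<lambda>k. w k / sqrt (ip n w w)) # qs)"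
    unfolding qs_def w_def by (simp add: Let_def)
  have wq: "ip n w (qs!s) = 0" if "s < length qs" for s
  proof -
    have "ip n w (qs!s) = ip n a (qs!s) - (\<Sum>r<length qs. ip n a (qs!r) * ip n (qs!r) (qs!s))"
      by (rule ip_comb) (simp add: w_def)
    also have "(\<Sum>r<length qs. ip n a (qs!r) * ip n (qs!r) (qs!s)) = (\<Sum>r<length qs. if r = s then ip n a (qs!r) else 0)"
      using on that by (intro sum.cong refl) (auto simp: orthon_def)
    also have "\<dots> = ip n a (qs!s)" using that by simp
    finally show ?thesis by simp
  qed
  show ?case
  proof (cases "ip n w w = 0")
    case True
    have "spans n qs a"
      unfolding spans_def
    proof (intro allI impI)
      fix k assume k: "k < n"
      have "w k = 0" using ip_self_zero[OF True k] .
      thus "a k = (\<Sum>r<length qs. ip n a (qs!r) * (qs!r) k)" using k by (simp add: w_def)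
    qed
    thus ?thesis using g True on len sp by auto
  next
    case False
    define nw where "nw = sqrt (ip n w w)"
    have nw0: "nw > 0" using False ip_self_nonneg[of n w] by (simp add: nw_def)
    define q0 where "q0 = (\<lambda>k. w k / nw)"
    have g2: "gs n (a # as) = q0 # qs" using g False by (simp add: q0_def nw_def)
    have q0q0: "ip n q0 q0 = 1"
    proof -
      have "ip n q0 q0 = ip n w w / nw / nw" unfolding q0_def by (simp add: ip_scale ip_scale2)
      also have "\<dots> = 1" using nw0 ip_self_nonneg[of n w] by (simp add: nw_def field_simps)
      finally show ?thesis .
    qed
    have q0q: "ip n q0 (qs!s) = 0" if "s < length qs" for s
      unfolding q0_def by (simp add: ip_scale wq[OF that])
    have on2: "orthon n (q0 # qs)"
      unfolding orthon_def
    proof (intro allI impI)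
      fix r s assume r: "r < length (q0 # qs)" and s: "s < length (q0 # qs)"
      show "ip n ((q0 # qs)!r) ((q0 # qs)!s) = (if r = s then 1 else 0)"
      proof (cases r)
        case 0
        show ?thesis
        proof (cases s)
          case 0 thus ?thesis using \<open>r = 0\<close> q0q0 by simp
        next
          case (Suc s') thus ?thesis using \<open>r = 0\<close> q0q s by simp
        qed
      next
        case (Suc r')
        show ?thesis
        proof (cases s)
          case 0 thus ?thesis using Suc q0q[of r'] r ip_sym[of n "qs!r'" q0] by simp
        next
          case (Suc s') thus ?thesis using \<open>r = Suc r'\<close> on r s by (simp add: orthon_def)
        qed
      qed
    qed
    have sum_shift: "(\<Sum>r<length (q0 # qs). f ((q0 # qs)!r)) = f q0 + (\<Sum>r<length qs. f (qs!r))" for f :: "vec \<Rightarrow> real"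
      by (simp only: length_Cons sum.lessThan_Suc_shift nth_Cons_0 nth_Cons_Suc)
    have spa: "spans n (q0 # qs) a"
      unfolding spans_def
    proof (intro allI impI)
      fix k assume k: "k < n"
      have aq0: "ip n a q0 = nw"
      proof -
        have "ip n w q0 = ip n a q0 - (\<Sum>r<length qs. ip n a (qs!r) * ip n (qs!r) q0)"
          by (rule ip_comb) (simp add: w_def)
        also have "(\<Sum>r<length qs. ip n a (qs!r) * ip n (qs!r) q0) = 0"
          using q0q by (intro sum.neutral) (metis ip_sym lessThan_iff mult_zero_right)
        finally have "ip n a q0 = ip n w q0" by simp
        also have "\<dots> = ip n w w / nw" unfolding q0_def by (simp add: ip_scale ip_scale2)
        also have "\<dots> = nw" using nw0 ip_self_nonneg[of n w] by (simp add: nw_def field_simps)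
        finally show ?thesis .
      qed
      have "a k = w k + (\<Sum>r<length qs. ip n a (qs!r) * (qs!r) k)" using k by (simp add: w_def)
      also have "w k = ip n a q0 * q0 k" using aq0 nw0 by (simp add: q0_def)
      finally show "a k = (\<Sum>r<length (q0 # qs). ip n a ((q0 # qs)!r) * ((q0 # qs)!r) k)"
        using sum_shift[of "\<lambda>q. ip n a q * q k"] by simp
    qed
    have spb: "spans n (q0 # qs) b" if b: "b \<in> set as" for b
      unfolding spans_def
    proof (intro allI impI)
      fix k assume k: "k < n"
      have bq0: "ip n b q0 = 0"
      proof -
        have "ip n b q0 = (\<Sum>r<length qs. ip n b (qs!r) * ip n (qs!r) q0)"
          by (rule ip_span) (use sp b in \<open>auto simp: spans_def\<close>)
        also have "\<dots> = 0" using q0q by (intro sum.neutral) (metis ip_sym lessThan_iff mult_zero_right)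
        finally show ?thesis .
      qed
      have "b k = (\<Sum>r<length qs. ip n b (qs!r) * (qs!r) k)" using sp b k by (auto simp: spans_def)
      thus "b k = (\<Sum>r<length (q0 # qs). ip n b ((q0 # qs)!r) * ((q0 # qs)!r) k)"
        using sum_shift[of "\<lambda>q. ip n b q * q k"] bq0 by simp
    qed
    show ?thesis using g2 on2 len spa spb by auto
  qed
qed

definition proj :: "nat \<Rightarrow> vec list \<Rightarrow> vec \<Rightarrow> vec" where
  "proj n qs v = (\<lambda>k. if k < n then v k - (\<Sum>r<length qs. ip n v (qs!r) * (qs!r) k) else 0)"

lemma ip_proj_left: "ip n (proj n qs v) h = ip n v h - (\<Sum>r<length qs. ip n v (qs!r) * ip n (qs!r) h)"
  by (rule ip_comb) (simp add: proj_def)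

lemma ip_proj_right: "ip n h (proj n qs v) = ip n v h - (\<Sum>r<length qs. ip n v (qs!r) * ip n (qs!r) h)"
  using ip_proj_left ip_sym by metis

lemma ip_proj_sym: "ip n u (proj n qs v) = ip n v (proj n qs u)"
proof -
  have "ip n u (proj n qs v) = ip n v u - (\<Sum>r<length qs. ip n v (qs!r) * ip n (qs!r) u)"
    by (rule ip_proj_right)
  also have "\<dots> = ip n u v - (\<Sum>r<length qs. ip n u (qs!r) * ip n (qs!r) v)"
    by (simp add: ip_sym mult.commute)
  also have "\<dots> = ip n v (proj n qs u)" by (rule ip_proj_right[symmetric])
  finally show ?thesis .
qed

lemma q_proj: assumes "orthon n qs" "s < length qs" shows "ip n (qs!s) (proj n qs v) = 0"
proof -
  have "ip n (qs!s) (proj n qs v) = ip n v (qs!s) - (\<Sum>r<length qs. ip n v (qs!r) * ip n (qs!r) (qs!s))"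
    by (rule ip_proj_right)
  also have "(\<Sum>r<length qs. ip n v (qs!r) * ip n (qs!r) (qs!s)) = (\<Sum>r<length qs. if r = s then ip n v (qs!r) else 0)"
    using assms by (intro sum.cong refl) (auto simp: orthon_def)
  also have "\<dots> = ip n v (qs!s)" using assms by simp
  finally show ?thesis by simp
qed

lemma proj_proj: assumes "orthon n qs" shows "ip n (proj n qs u) (proj n qs v) = ip n u (proj n qs v)"
proof -
  have "ip n (proj n qs u) (proj n qs v) = ip n u (proj n qs v) - (\<Sum>r<length qs. ip n u (qs!r) * ip n (qs!r) (proj n qs v))"
    by (rule ip_proj_left)
  also have "(\<Sum>r<length qs. ip n u (qs!r) * ip n (qs!r) (proj n qs v)) = 0"
    using q_proj[OF assms] by (intro sum.neutral) auto
  finally show ?thesis by simp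
qed

lemma span_proj: assumes "spans n qs a" shows "ip n a (proj n qs v) = 0"
proof -
  have "ip n a (proj n qs v) = ip n v a - (\<Sum>r<length qs. ip n v (qs!r) * ip n (qs!r) a)"
    by (rule ip_proj_right)
  also have "ip n v a = ip n a v" by (rule ip_sym)
  also have "ip n a v = (\<Sum>r<length qs. ip n a (qs!r) * ip n (qs!r) v)"
    by (rule ip_span) (use assms in \<open>auto simp: spans_def\<close>)
  also have "\<dots> = (\<Sum>r<length qs. ip n v (qs!r) * ip n (qs!r) a)"
    by (simp add: ip_sym mult.commute)
  finally show ?thesis by simp
qed

lemma proj_self: "ip n v (proj n qs v) = ip n v v - (\<Sum>r<length qs. (ip n (qs!r) v)\<^sup>2)"
  by (simp add: ip_proj_right ip_sym power2_eq_square)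

lemma ip_sumvec:
  assumes "\<And>k. k < n \<Longrightarrow> z k = (\<Sum>j\<in>J. f j k)"
  shows "ip n h z = (\<Sum>j\<in>J. ip n h (f j))"
proof -
  have "ip n h z = (\<Sum>k<n. \<Sum>j\<in>J. h k * f j k)"
    unfolding ip_def using assms by (intro sum.cong refl) (simp add: sum_distrib_left)
  also have "\<dots> = (\<Sum>j\<in>J. ip n h (f j))" unfolding ip_def by (rule sum.swap)
  finally show ?thesis .
qed

lemma ip_sumvec_left:
  assumes "\<And>k. k < n \<Longrightarrow> z k = (\<Sum>j\<in>J. f j k)"
  shows "ip n z h = (\<Sum>j\<in>J. ip n (f j) h)"
proof -
  have "ip n z h = ip n h z" by (rule ip_sym)
  also have "\<dots> = (\<Sum>j\<in>J. ip n h (f j))" by (rule ip_sumvec[OF assms])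
  also have "\<dots> = (\<Sum>j\<in>J. ip n (f j) h)" by (intro sum.cong refl ip_sym)
  finally show ?thesis .
qed

lemma good_direction:
  fixes V :: "nat \<Rightarrow> vec" and qs :: "vec list" and N n :: nat
  assumes on: "orthon n qs" and N: "N \<ge> 1"
    and vn: "\<And>i. i \<in> {1..N} \<Longrightarrow> ip n (V i) (V i) = 1"
    and a: "\<And>i. i \<in> {1..N} \<Longrightarrow> (\<Sum>r<length qs. (ip n (qs!r) (V i))\<^sup>2) \<le> 3/4"
    and b: "\<And>i j. i \<in> {1..N} \<Longrightarrow> j \<in> {1..N} \<Longrightarrow> i \<noteq> j \<Longrightarrow> \<bar>ip n (V j) (proj n qs (V i))\<bar> \<le> 1 / (8 * N)"
  shows "\<exists>y. (\<forall>k\<ge>n. y k = 0) \<and> ip n y y = 1 \<and> (\<forall>a. spans n qs a \<longrightarrow> ip n a y = 0) \<and>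
             (\<forall>i\<in>{1..N}. ip n (V i) y \<le> - 1 / (9 * sqrt N))"
proof -
  define z where "z = (\<lambda>k. \<Sum>j\<in>{1..N}. proj n qs (V j) k)"
  have zip: "ip n h z = (\<Sum>j\<in>{1..N}. ip n h (proj n qs (V j)))" for h
    by (rule ip_sumvec) (simp add: z_def)
  have lo: "ip n (V i) z \<ge> 1/8" and hi: "ip n (V i) z \<le> 9/8" if i: "i \<in> {1..N}" for i
  proof -
    have split: "ip n (V i) z = ip n (V i) (proj n qs (V i)) + (\<Sum>j\<in>{1..N}-{i}. ip n (V i) (proj n qs (V j)))"
      unfolding zip using i by (simp add: sum.remove)
    have d1: "ip n (V i) (proj n qs (V i)) \<ge> 1/4" "ip n (V i) (proj n qs (V i)) \<le> 1"
      using proj_self[of n "V i" qs] vn[OF i] a[OF i] by (auto intro: sum_nonneg)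
    have "\<bar>\<Sum>j\<in>{1..N}-{i}. ip n (V i) (proj n qs (V j))\<bar> \<le> (\<Sum>j\<in>{1..N}-{i}. 1 / (8 * N))"
      by (rule order_trans[OF sum_abs sum_mono]) (use b i in auto)
    also have "\<dots> = real (N - 1) / (8 * N)" using i by (simp add: card_Diff_singleton)
    also have "\<dots> \<le> 1/8" using N by (simp add: field_simps)
    finally have "\<bar>\<Sum>j\<in>{1..N}-{i}. ip n (V i) (proj n qs (V j))\<bar> \<le> 1/8" .
    thus "ip n (V i) z \<ge> 1/8" "ip n (V i) z \<le> 9/8" using split d1 by linarith+
  qed
  have zz: "ip n z z = (\<Sum>i\<in>{1..N}. ip n (V i) z)"
  proof -
    have "ip n z z = (\<Sum>i\<in>{1..N}. ip n (proj n qs (V i)) z)"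
      by (rule ip_sumvec_left) (simp add: z_def)
    also have "\<dots> = (\<Sum>i\<in>{1..N}. ip n (V i) z)"
    proof (intro sum.cong refl)
      fix i
      have "ip n (proj n qs (V i)) z = (\<Sum>j\<in>{1..N}. ip n (proj n qs (V i)) (proj n qs (V j)))" by (rule zip)
      also have "\<dots> = (\<Sum>j\<in>{1..N}. ip n (V i) (proj n qs (V j)))" by (simp add: proj_proj[OF on])
      also have "\<dots> = ip n (V i) z" by (rule zip[symmetric])
      finally show "ip n (proj n qs (V i)) z = ip n (V i) z" .
    qed
    finally show ?thesis .
  qed
  have zzlo: "ip n z z \<ge> real N / 8"
  proof -
    have "(\<Sum>i\<in>{1..N}. (1/8::real)) \<le> (\<Sum>i\<in>{1..N}. ip n (V i) z)" by (intro sum_mono lo)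
    thus ?thesis using zz by simp
  qed
  have zzhi: "ip n z z \<le> 9 * real N / 8"
  proof -
    have "(\<Sum>i\<in>{1..N}. ip n (V i) z) \<le> (\<Sum>i\<in>{1..N}. (9/8::real))" by (intro sum_mono hi)
    thus ?thesis using zz by simp
  qed
  have "real N / 8 > 0" using N by simp
  hence zpos: "ip n z z > 0" using zzlo by linarith
  define s where "s = sqrt (ip n z z)"
  have s0: "s > 0" using zpos by (simp add: s_def)
  define y where "y = (\<lambda>k. - z k / s)"
  have yip: "ip n h y = - ip n h z / s" for h
    by (simp add: y_def ip_def sum_divide_distrib sum_negf)
  show ?thesis
  proof (intro exI conjI allI impI ballI)
    fix k assume "n \<le> k" thus "y k = 0" by (simp add: y_def z_def proj_def)
  next
    have ss: "s * s = ip n z z" using zpos by (simp add: s_def)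
    have "ip n y y = ip n z z / s / s"
      by (simp add: ip_def y_def sum_divide_distrib)
    also have "\<dots> = 1" using s0 by (simp add: ss[symmetric])
    finally show "ip n y y = 1" .
  next
    fix a assume "spans n qs a"
    hence "ip n a z = 0" unfolding zip by (simp add: span_proj)
    thus "ip n a y = 0" by (simp add: yip)
  next
    fix i assume i: "i \<in> {1..N}"
    have "s \<le> sqrt (9 * real N / 8)" unfolding s_def using zzhi by simp
    also have "\<dots> \<le> 9 / 8 * sqrt N"
    proof -
      have "sqrt (9 * real N / 8) \<le> sqrt ((9/8)^2 * real N)" by (intro real_sqrt_le_mono) (simp add: power2_eq_square)
      also have "\<dots> = 9/8 * sqrt N" by (simp add: real_sqrt_mult)
      finally show ?thesis .
    qed
    finally have sle: "s \<le> 9 / 8 * sqrt N" .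
    have "ip n (V i) y = - ip n (V i) z / s" by (rule yip)
    also have "\<dots> \<le> - (1/8) / s"
    proof -
      have "(1/8) / s \<le> ip n (V i) z / s" using lo[OF i] s0 by (intro divide_right_mono) auto
      thus ?thesis by simp
    qed
    also have "\<dots> \<le> - (1/8) / (9 / 8 * sqrt N)" using s0 sle by (simp add: frac_le)
    also have "\<dots> = - 1 / (9 * sqrt N)" by simp
    finally show "ip n (V i) y \<le> - 1 / (9 * sqrt N)" .
  qed
qed

lemma abs_mult_le_sq: "\<bar>a * b\<bar> \<le> (a * a + b * b) / 2" for a b :: real
proof -
  have "0 \<le> (\<bar>a\<bar> - \<bar>b\<bar>) * (\<bar>a\<bar> - \<bar>b\<bar>)" by simp
  moreover have "\<bar>a\<bar> * \<bar>a\<bar> = a * a" "\<bar>b\<bar> * \<bar>b\<bar> = b * b" by (simp_all add: abs_mult_self_eq)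
  ultimately show ?thesis unfolding abs_mult by (simp add: algebra_simps)
qed

lemma ip_abs_le: "\<bar>ip n x y\<bar> \<le> ip n x x / 2 + ip n y y / 2"
proof -
  have "\<bar>ip n x y\<bar> \<le> (\<Sum>k<n. \<bar>x k * y k\<bar>)" unfolding ip_def by (rule sum_abs)
  also have "\<dots> \<le> (\<Sum>k<n. (x k * x k + y k * y k) / 2)" by (intro sum_mono abs_mult_le_sq)
  also have "\<dots> = ip n x x / 2 + ip n y y / 2" by (simp add: ip_def add_divide_distrib sum.distrib sum_divide_distrib)
  finally show ?thesis .
qed

lemma unit_ball_ip: "x \<in> unit_ball d \<Longrightarrow> ip d x x \<le> 1"
  by (simp add: unit_ball_def ip_def power2_eq_square)

lemma Vfams_entry: "V \<in> Vfams d N \<Longrightarrow> 1 \<le> m \<Longrightarrow> m \<le> N \<Longrightarrow> k < d \<Longrightarrow> V m k * V m k = 1 / real d"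
proof -
  assume a: "V \<in> Vfams d N" "1 \<le> m" "m \<le> N" "k < d"
  hence "V m k \<in> {-1 / sqrt (real d), 1 / sqrt (real d)}" by (auto simp: Vfams_def)
  moreover have "real d > 0" using a by simp
  ultimately show ?thesis by (auto simp: power2_eq_square[symmetric] power_divide)
qed

lemma Vfams_norm: "V \<in> Vfams d N \<Longrightarrow> 1 \<le> m \<Longrightarrow> m \<le> N \<Longrightarrow> d > 0 \<Longrightarrow> ip d (V m) (V m) = 1"
proof -
  assume a: "V \<in> Vfams d N" "1 \<le> m" "m \<le> N" "d > 0"
  show ?thesis
  proof -
    have False: "d \<noteq> 0" using a by simp
    have "ip d (V m) (V m) = (\<Sum>k<d. 1 / real d)"
      unfolding ip_def using a by (intro sum.cong refl) (auto intro: Vfams_entry)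
    thus ?thesis using False by simp
  qed
qed

definition trunc :: "nat \<Rightarrow> (nat \<Rightarrow> vec) \<Rightarrow> nat \<Rightarrow> vec" where
  "trunc i V = (\<lambda>m. if m \<le> i then V m else (\<lambda>k. 0))"

lemma Max_sub_eq:
  fixes f :: "nat \<Rightarrow> real"
  assumes "finite B" "A \<subseteq> B" "A \<noteq> {}" "\<And>b. b \<in> B - A \<Longrightarrow> \<exists>a\<in>A. f b \<le> f a"
  shows "Max (f ` B) = Max (f ` A)"
proof (rule antisym)
  have fA: "finite A" using assms finite_subset by blast
  have fB: "f ` B \<noteq> {}" using assms by auto
  have "\<forall>y\<in>f ` B. y \<le> Max (f ` A)"
  proof
    fix y assume "y \<in> f ` B"
    then obtain b where b: "b \<in> B" "y = f b" by auto
    show "y \<le> Max (f ` A)"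
    proof (cases "b \<in> A")
      case True thus ?thesis using fA b by auto
    next
      case False
      then obtain a where "a \<in> A" "f b \<le> f a" using assms(4) b by blast
      thus ?thesis using fA b by (meson Max_ge finite_imageI image_eqI order_trans)
    qed
  qed
  thus "Max (f ` B) \<le> Max (f ` A)" using fB assms(1) by (subst Max_le_iff) auto
  show "Max (f ` A) \<le> Max (f ` B)" using assms fA by (intro Max_mono) auto
qed

lemma vmax_le_one:
  assumes x: "ip d x x \<le> 1" and N: "NN \<delta> d \<ge> 1" and g: "gam \<delta> d \<ge> 0"
    and V: "\<And>m. 1 \<le> m \<Longrightarrow> m \<le> NN \<delta> d \<Longrightarrow> ip d (V m) (V m) \<le> 1"
  shows "vmax \<delta> d V x \<le> 1"
proof -
  have "\<forall>y\<in>(\<lambda>i. ip d (V i) x - real i * gam \<delta> d) ` {1..NN \<delta> d}. y \<le> 1"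
  proof
    fix y assume "y \<in> (\<lambda>i. ip d (V i) x - real i * gam \<delta> d) ` {1..NN \<delta> d}"
    then obtain m where m: "1 \<le> m" "m \<le> NN \<delta> d" and y: "y = ip d (V m) x - real m * gam \<delta> d" by auto
    have "ip d (V m) x \<le> \<bar>ip d (V m) x\<bar>" by simp
    hence "ip d (V m) x \<le> 1" using ip_abs_le[of d "V m" x] V[OF m] x by linarith
    moreover have "real m * gam \<delta> d \<ge> 0" using g by simp
    ultimately show "y \<le> 1" using y by linarith
  qed
  thus ?thesis unfolding vmax_def by (subst Max_le_iff) (use N in auto)
qed

lemma LL_pos: "LL d > 0" by (simp add: LL_def)

lemma oracle_agree_A:
  assumes A: "Ainf d A x > 2 / LL d" and v1: "vmax \<delta> d V x \<le> 1" and v2: "vmax \<delta> d V' x \<le> 1"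
  shows "fo_oracle \<delta> d A V x = fo_oracle \<delta> d A V' x"
proof -
  have "LL d * Ainf d A x > 2" using A LL_pos[of d] by (simp add: field_simps)
  hence c1: "LL d * Ainf d A x - 1 \<ge> vmax \<delta> d V x" and c2: "LL d * Ainf d A x - 1 \<ge> vmax \<delta> d V' x"
    using v1 v2 by linarith+
  have "Fhard \<delta> d A V x = Fhard \<delta> d A V' x"
    unfolding Fhard_def using c1 c2 by (simp add: max_def)
  moreover have "subgrad \<delta> d A V x = subgrad \<delta> d A V' x"
    unfolding subgrad_def using c1 c2 by simp
  ultimately show ?thesis by (simp add: fo_oracle_def)
qed

lemma vmax_trunc:
  fixes V :: "nat \<Rightarrow> vec" and x :: vec and \<delta> :: real and d i :: nat
  defines "P \<equiv> (\<lambda>W m. 1 \<le> m \<and> m \<le> NN \<delta> d \<and> ip d (W m) x - real m * gam \<delta> d = vmax \<delta> d W x)"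
  assumes g0: "gam \<delta> d > 0" and i: "1 \<le> i" "i \<le> NN \<delta> d"
    and xi: "\<bar>ip d x (V i)\<bar> < gam \<delta> d / 4"
    and xj: "\<And>j. i < j \<Longrightarrow> j \<le> NN \<delta> d \<Longrightarrow> \<bar>ip d x (V j)\<bar> < gam \<delta> d / 4"
  shows "vmax \<delta> d V x = vmax \<delta> d (trunc i V) x \<and> (LEAST m. P V m) = (LEAST m. P (trunc i V) m)
         \<and> (LEAST m. P V m) \<le> i"
proof -
  define N where "N = NN \<delta> d"
  define \<gamma> where "\<gamma> = gam \<delta> d"
  define g where "g m = ip d (V m) x - real m * \<gamma>" for m
  define g' where "g' m = ip d (trunc i V m) x - real m * \<gamma>" for m
  have gg: "m \<le> i \<Longrightarrow> g' m = g m" for m by (simp add: g_def g'_def trunc_def)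
  have gi: "g i > - \<gamma>/4 - real i * \<gamma>"
    using xi by (simp add: g_def \<gamma>_def ip_sym[of d x] abs_less_iff)
  have glt: "g m < g i" if "i < m" "m \<le> N" for m
  proof -
    have "ip d (V m) x < \<gamma>/4" using xj[OF that[unfolded N_def]] by (simp add: \<gamma>_def ip_sym[of d x] abs_less_iff)
    moreover have "real m \<ge> real i + 1" using that by simp
    hence "real m * \<gamma> \<ge> (real i + 1) * \<gamma>" using g0 by (intro mult_right_mono) (auto simp: \<gamma>_def)
    ultimately show ?thesis using gi g0 by (simp add: g_def \<gamma>_def algebra_simps)
  qed
  have g'lt: "g' m < g' i" if "i < m" "m \<le> N" for m
  proof -
    have "ip d (trunc i V m) x = 0" using that by (simp add: trunc_def ip_def)
    moreover have "real m \<ge> real i + 1" using that by simp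
    hence "real m * \<gamma> \<ge> (real i + 1) * \<gamma>" using g0 by (intro mult_right_mono) (auto simp: \<gamma>_def)
    ultimately show ?thesis using gi g0 gg[of i] by (simp add: g'_def \<gamma>_def algebra_simps)
  qed
  have sub: "{1..i} \<subseteq> {1..N}" "{1..i} \<noteq> {}" using i by (auto simp: N_def)
  have M1: "Max (g ` {1..N}) = Max (g ` {1..i})"
  proof (rule Max_sub_eq)
    fix b assume "b \<in> {1..N} - {1..i}"
    hence "i < b" "b \<le> N" by auto
    thus "\<exists>a\<in>{1..i}. g b \<le> g a" using glt i by (intro bexI[of _ i]) (auto intro: less_imp_le)
  qed (use sub in auto)
  have M2: "Max (g' ` {1..N}) = Max (g' ` {1..i})"
  proof (rule Max_sub_eq)
    fix b assume "b \<in> {1..N} - {1..i}"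
    hence "i < b" "b \<le> N" by auto
    thus "\<exists>a\<in>{1..i}. g' b \<le> g' a" using g'lt i by (intro bexI[of _ i]) (auto intro: less_imp_le)
  qed (use sub in auto)
  have M3: "g ` {1..i} = g' ` {1..i}" using gg by (auto simp: image_def)
  have vV: "vmax \<delta> d V x = Max (g ` {1..N})" by (simp add: vmax_def g_def N_def \<gamma>_def)
  have vT: "vmax \<delta> d (trunc i V) x = Max (g' ` {1..N})" by (simp add: vmax_def g'_def N_def \<gamma>_def)
  have veq: "vmax \<delta> d V x = vmax \<delta> d (trunc i V) x" using M1 M2 M3 vV vT by simp
  define M where "M = vmax \<delta> d V x"
  have Mge: "g m \<le> M" if "m \<in> {1..N}" for m
    using that by (simp add: M_def vV)
  have PV: "P V m \<longleftrightarrow> m \<in> {1..N} \<and> g m = M" for m by (auto simp: P_def g_def M_def N_def \<gamma>_def)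
  have PT: "P (trunc i V) m \<longleftrightarrow> m \<in> {1..N} \<and> g' m = M" for m
    by (auto simp: P_def g'_def M_def N_def \<gamma>_def veq)
  have Pi: "P V m \<Longrightarrow> m \<le> i" for m
  proof (rule ccontr)
    assume "P V m" "\<not> m \<le> i"
    hence "g m = M" "i < m" "m \<le> N" by (auto simp: PV)
    moreover have "g i \<le> M" using Mge i by (simp add: N_def)
    ultimately show False using glt by force
  qed
  have PTi: "P (trunc i V) m \<Longrightarrow> m \<le> i" for m
  proof (rule ccontr)
    assume "P (trunc i V) m" "\<not> m \<le> i"
    hence "g' m = M" "i < m" "m \<le> N" by (auto simp: PT)
    moreover have "g' i \<le> M" using Mge[of i] gg[of i] i by (simp add: N_def)
    ultimately show False using g'lt by force
  qed
  have Peq: "P V = P (trunc i V)"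
  proof
    fix m show "P V m = P (trunc i V) m"
      using Pi PTi gg PV PT by (metis)
  qed
  have ex: "\<exists>m. P V m"
  proof -
    have "M \<in> g ` {1..N}" unfolding M_def vV using sub by (intro Max_in) auto
    thus ?thesis using PV by auto
  qed
  have "(LEAST m. P V m) \<le> i" using Pi[OF LeastI_ex[OF ex]] .
  thus ?thesis using veq Peq by simp
qed

lemma oracle_agree_trunc:
  assumes g0: "gam \<delta> d > 0" and i: "1 \<le> i" "i \<le> NN \<delta> d"
    and xi: "\<bar>ip d x (V i)\<bar> < gam \<delta> d / 4"
    and xj: "\<And>j. i < j \<Longrightarrow> j \<le> NN \<delta> d \<Longrightarrow> \<bar>ip d x (V j)\<bar> < gam \<delta> d / 4"
  shows "fo_oracle \<delta> d A V x = fo_oracle \<delta> d A (trunc i V) x"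
proof -
  define P where "P = (\<lambda>W m. 1 \<le> m \<and> m \<le> NN \<delta> d \<and> ip d (W m) x - real m * gam \<delta> d = vmax \<delta> d W x)"
  have h: "vmax \<delta> d V x = vmax \<delta> d (trunc i V) x \<and> (LEAST m. P V m) = (LEAST m. P (trunc i V) m)
         \<and> (LEAST m. P V m) \<le> i"
    unfolding P_def by (rule vmax_trunc[where V=V and x=x and \<delta>=\<delta> and d=d and i=i]) (use g0 i xi xj in auto)
  have Fe: "Fhard \<delta> d A V x = Fhard \<delta> d A (trunc i V) x" using h by (simp add: Fhard_def)
  have tr: "trunc i V (LEAST m. P V m) = V (LEAST m. P V m)" using h by (simp add: trunc_def)
  have "subgrad \<delta> d A V x = subgrad \<delta> d A (trunc i V) x"
  proof (cases "LL d * Ainf d A x - 1 \<ge> vmax \<delta> d V x")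
    case True thus ?thesis using h by (simp add: subgrad_def)
  next
    case False
    have "subgrad \<delta> d A V x = (\<lambda>k. V (LEAST m. P V m) k / (sqrt (real d) * LL d))"
      using False by (simp add: subgrad_def P_def Let_def)
    moreover have "subgrad \<delta> d A (trunc i V) x = (\<lambda>k. trunc i V (LEAST m. P (trunc i V) m) k / (sqrt (real d) * LL d))"
      using False h by (simp add: subgrad_def P_def Let_def)
    ultimately show ?thesis using h tr by simp
  qed
  thus ?thesis using Fe by (simp add: fo_oracle_def)
qed

lemma trunc_norm_le:
  assumes "V \<in> Vfams d (NN \<delta> d)" "d > 0" "1 \<le> m" "m \<le> NN \<delta> d"
  shows "ip d (trunc i V m) (trunc i V m) \<le> 1"
proof (cases "m \<le> i")
  case True thus ?thesis using Vfams_norm[of V d "NN \<delta> d" m] assms by (simp add: trunc_def)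
next
  case False thus ?thesis by (simp add: trunc_def ip_def)
qed

lemma query_Suc: "query alg orc (Suc n) = alg (resp_hist alg orc n)"
  by (simp add: query_def)

lemma hist_agree:
  assumes valid: "valid_alg d alg" and V: "V \<in> Vfams d (NN \<delta> d)" and d0: "d > 0"
    and g0: "gam \<delta> d > 0" and i: "1 \<le> i" "i \<le> NN \<delta> d"
    and G: "\<And>t j. 1 \<le> t \<Longrightarrow> t \<le> T \<Longrightarrow> i < j \<Longrightarrow> j \<le> NN \<delta> d \<Longrightarrow>
             \<bar>ip d (query alg (fo_oracle \<delta> d A (trunc i V)) t) (V j)\<bar> < gam \<delta> d / 4"
  shows "n \<le> T \<Longrightarrow> (\<forall>t. 1 \<le> t \<and> t \<le> n \<longrightarrow> \<not> (\<bar>ip d (query alg (fo_oracle \<delta> d A V) t) (V i)\<bar> \<ge> gam \<delta> d / 4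
              \<and> Ainf d A (query alg (fo_oracle \<delta> d A V) t) \<le> 2 / LL d))
         \<Longrightarrow> resp_hist alg (fo_oracle \<delta> d A V) n = resp_hist alg (fo_oracle \<delta> d A (trunc i V)) n"
proof (induction n)
  case 0 thus ?case by simp
next
  case (Suc n)
  have IH: "resp_hist alg (fo_oracle \<delta> d A V) n = resp_hist alg (fo_oracle \<delta> d A (trunc i V)) n"
    using Suc by auto
  define x where "x = alg (resp_hist alg (fo_oracle \<delta> d A V) n)"
  have qV: "query alg (fo_oracle \<delta> d A V) (Suc n) = x" by (simp add: query_Suc x_def)
  have qT: "query alg (fo_oracle \<delta> d A (trunc i V)) (Suc n) = x" by (simp add: query_Suc x_def IH)
  have xb: "ip d x x \<le> 1" using valid unit_ball_ip by (auto simp: valid_alg_def x_def)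
  have N1: "NN \<delta> d \<ge> 1" using i by simp
  have nC: "\<not> (\<bar>ip d x (V i)\<bar> \<ge> gam \<delta> d / 4 \<and> Ainf d A x \<le> 2 / LL d)"
    using Suc.prems(2)[rule_format, of "Suc n"] qV by simp
  have eq: "fo_oracle \<delta> d A V x = fo_oracle \<delta> d A (trunc i V) x"
  proof (cases "Ainf d A x > 2 / LL d")
    case True
    show ?thesis
    proof (rule oracle_agree_A[OF True])
      show "vmax \<delta> d V x \<le> 1"
        by (rule vmax_le_one[OF xb N1]) (use g0 Vfams_norm[OF V] d0 in auto)
      show "vmax \<delta> d (trunc i V) x \<le> 1"
        by (rule vmax_le_one[OF xb N1]) (use g0 trunc_norm_le[OF V d0] in auto)
    qed
  next
    case False
    hence xi: "\<bar>ip d x (V i)\<bar> < gam \<delta> d / 4" using nC by auto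
    show ?thesis
    proof (rule oracle_agree_trunc[where V=V and x=x and \<delta>=\<delta> and d=d and i=i and A=A, OF g0 i xi])
      fix j assume "i < j" "j \<le> NN \<delta> d"
      thus "\<bar>ip d x (V j)\<bar> < gam \<delta> d / 4" using G[of "Suc n" j] Suc.prems(1) qT by auto
    qed
  qed
  show ?case using IH eq by (simp add: x_def)
qed

lemma corr_order:
  assumes valid: "valid_alg d alg" and V: "V \<in> Vfams d (NN \<delta> d)" and d0: "d > 0"
    and g0: "gam \<delta> d > 0" and i: "1 \<le> i" "i + 1 \<le> NN \<delta> d"
    and G: "\<And>t j. 1 \<le> t \<Longrightarrow> t \<le> T \<Longrightarrow> i < j \<Longrightarrow> j \<le> NN \<delta> d \<Longrightarrow>
             \<bar>ip d (query alg (fo_oracle \<delta> d A (trunc i V)) t) (V j)\<bar> < gam \<delta> d / 4"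
    and fin: "corr_time \<delta> d T alg A V (i + 1) \<noteq> \<infinity>"
  shows "corr_time \<delta> d T alg A V i < corr_time \<delta> d T alg A V (i + 1)"
proof -
  define C where "C = (\<lambda>j t. 1 \<le> t \<and> t \<le> T \<and>
                  \<bar>ip d (query alg (fo_oracle \<delta> d A V) t) (V j)\<bar> \<ge> gam \<delta> d / 4 \<and>
                  Ainf d A (query alg (fo_oracle \<delta> d A V) t) \<le> 2 / LL d)"
  have ct: "corr_time \<delta> d T alg A V j = (if \<exists>t. C j t then enat (LEAST t. C j t) else \<infinity>)" for j
    by (simp only: corr_time_def C_def Let_def)
  have ex: "\<exists>t. C (i+1) t" using fin ct[of "i+1"] by (auto split: if_splits)
  define b where "b = (LEAST t. C (i+1) t)"
  have Cb: "C (i+1) b" using LeastI_ex[OF ex] by (simp add: b_def)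
  have tb: "corr_time \<delta> d T alg A V (i+1) = enat b" using ct[of "i+1"] ex by (simp add: b_def)
  show ?thesis
  proof (rule ccontr)
    assume "\<not> ?thesis"
    hence ge: "corr_time \<delta> d T alg A V i \<ge> enat b" using tb by (simp add: not_less)
    have noC: "\<forall>t. 1 \<le> t \<and> t \<le> b - 1 \<longrightarrow> \<not> C i t"
    proof (intro allI impI)
      fix t assume t: "1 \<le> t \<and> t \<le> b - 1"
      show "\<not> C i t"
      proof
        assume Cit: "C i t"
        hence exi: "\<exists>t. C i t" by blast
        have "(LEAST t. C i t) \<le> t" by (rule Least_le[where P="C i", OF Cit])
        moreover have "corr_time \<delta> d T alg A V i = enat (LEAST t. C i t)" using ct[of i] exi by simp
        ultimately have "corr_time \<delta> d T alg A V i \<le> enat t" by simp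
        moreover have "t < b" using t Cb by (auto simp: C_def)
        ultimately show False using ge by (metis enat_ord_simps(2) leD order_le_less_trans)
      qed
    qed
    have bT: "b - 1 \<le> T" using Cb by (auto simp: C_def)
    have hist: "resp_hist alg (fo_oracle \<delta> d A V) (b - 1) = resp_hist alg (fo_oracle \<delta> d A (trunc i V)) (b - 1)"
    proof (rule hist_agree[OF valid V d0 g0 i(1) _ G bT])
      show "i \<le> NN \<delta> d" using i by simp
      show "\<forall>t. 1 \<le> t \<and> t \<le> b - 1 \<longrightarrow> \<not> (\<bar>ip d (query alg (fo_oracle \<delta> d A V) t) (V i)\<bar> \<ge> gam \<delta> d / 4
              \<and> Ainf d A (query alg (fo_oracle \<delta> d A V) t) \<le> 2 / LL d)"
      proof (intro allI impI)
        fix t assume t: "1 \<le> t \<and> t \<le> b - 1"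
        hence "t \<le> T" using bT by simp
        thus "\<not> (\<bar>ip d (query alg (fo_oracle \<delta> d A V) t) (V i)\<bar> \<ge> gam \<delta> d / 4
              \<and> Ainf d A (query alg (fo_oracle \<delta> d A V) t) \<le> 2 / LL d)"
          using noC t by (simp add: C_def)
      qed
    qed auto
    have "query alg (fo_oracle \<delta> d A V) b = query alg (fo_oracle \<delta> d A (trunc i V)) b"
      using hist by (simp add: query_def)
    hence "\<bar>ip d (query alg (fo_oracle \<delta> d A V) b) (V (i+1))\<bar> < gam \<delta> d / 4"
      using G[of b "i+1"] Cb i by (auto simp: C_def)
    thus False using Cb by (auto simp: C_def)
  qed
qed

abbreviation "cV d \<equiv> 1 / sqrt (real d)"

lemma Vfams_mem: "V \<in> Vfams d N \<longleftrightarrow> (\<forall>i. (1 \<le> i \<and> i \<le> N \<longrightarrow> V i \<in> cube d (cV d)) \<and> (\<not> (1 \<le> i \<and> i \<le> N) \<longrightarrow> V i = (\<lambda>k. 0)))"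
  unfolding Vfams_def cube_def by (auto simp: fun_eq_iff)

lemma finite_Vfams: "finite (Vfams d N)"
proof -
  have "inj_on (\<lambda>V. restrict V {1..N}) (Vfams d N)"
  proof (rule inj_onI)
    fix V W assume V: "V \<in> Vfams d N" and W: "W \<in> Vfams d N" and e: "restrict V {1..N} = restrict W {1..N}"
    show "V = W"
    proof
      fix i show "V i = W i"
        using V W fun_cong[OF e, of i] by (cases "1 \<le> i \<and> i \<le> N") (auto simp: Vfams_mem)
    qed
  qed
  moreover have "(\<lambda>V. restrict V {1..N}) ` Vfams d N \<subseteq> PiE {1..N} (\<lambda>_. cube d (cV d))"
    by (auto simp: Vfams_mem)
  moreover have "finite (PiE {1..N} (\<lambda>_. cube d (cV d)))" by (intro finite_PiE) auto
  ultimately show ?thesis by (meson finite_imageD finite_subset)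
qed

lemma finite_Amats: "finite (Amats d)"
proof -
  have mem: "A \<in> Amats d \<Longrightarrow> (j < d div 2 \<longrightarrow> A j \<in> cube d 1) \<and> (\<not> j < d div 2 \<longrightarrow> A j = (\<lambda>k. 0))" for A j
    unfolding Amats_def cube_def by (auto simp: fun_eq_iff)
  have "inj_on (\<lambda>A. restrict A {..<d div 2}) (Amats d)"
  proof (rule inj_onI)
    fix V W assume V: "V \<in> Amats d" and W: "W \<in> Amats d" and e: "restrict V {..<d div 2} = restrict W {..<d div 2}"
    show "V = W"
    proof
      fix i show "V i = W i"
        using mem[OF V, of i] mem[OF W, of i] fun_cong[OF e, of i] by (cases "i < d div 2") auto
    qed
  qed
  moreover have "(\<lambda>A. restrict A {..<d div 2}) ` Amats d \<subseteq> PiE {..<d div 2} (\<lambda>_. cube d 1)"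
    using mem by auto
  moreover have "finite (PiE {..<d div 2} (\<lambda>_. cube d 1))" by (intro finite_PiE) auto
  ultimately show ?thesis by (meson finite_imageD finite_subset)
qed

lemma fiber_card:
  assumes j: "1 \<le> j" "j \<le> N" and V0: "V0 \<in> Vfams d N"
  shows "card {V\<in>Vfams d N. V(j := (\<lambda>k. 0)) = V0(j := (\<lambda>k. 0)) \<and> Q V} = card {u\<in>cube d (cV d). Q (V0(j := u))}"
proof -
  let ?W = "V0(j := (\<lambda>k. 0))"
  have "{V\<in>Vfams d N. V(j := (\<lambda>k. 0)) = ?W \<and> Q V} = (\<lambda>u. V0(j := u)) ` {u\<in>cube d (cV d). Q (V0(j := u))}"
  proof (intro equalityI subsetI)
    fix V assume "V \<in> {V\<in>Vfams d N. V(j := (\<lambda>k. 0)) = ?W \<and> Q V}"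
    hence V: "V \<in> Vfams d N" "V(j := (\<lambda>k. 0)) = ?W" "Q V" by auto
    have "V = V0(j := V j)"
    proof
      fix i show "V i = (V0(j := V j)) i" using fun_cong[OF V(2), of i] by (cases "i = j") auto
    qed
    moreover have "V j \<in> cube d (cV d)" using V(1) j by (simp add: Vfams_mem)
    ultimately show "V \<in> (\<lambda>u. V0(j := u)) ` {u\<in>cube d (cV d). Q (V0(j := u))}"
      using V(3) by (metis (mono_tags, lifting) image_eqI mem_Collect_eq)
  next
    fix V assume "V \<in> (\<lambda>u. V0(j := u)) ` {u\<in>cube d (cV d). Q (V0(j := u))}"
    then obtain u where u: "u \<in> cube d (cV d)" "Q (V0(j := u))" "V = V0(j := u)" by auto
    have "V \<in> Vfams d N" using V0 u j by (auto simp: Vfams_mem)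
    thus "V \<in> {V\<in>Vfams d N. V(j := (\<lambda>k. 0)) = ?W \<and> Q V}" using u by auto
  qed
  moreover have "inj_on (\<lambda>u. V0(j := u)) {u\<in>cube d (cV d). Q (V0(j := u))}"
    by (rule inj_onI) (metis fun_upd_same)
  ultimately show ?thesis by (simp add: card_image)
qed

lemma count_Vfams:
  assumes j: "1 \<le> j" "j \<le> N" and d0: "d > 0"
    and bound: "\<And>V. V \<in> Vfams d N \<Longrightarrow> real (card {u\<in>cube d (cV d). Q (V(j := u))}) \<le> p * 2^d"
  shows "real (card {V\<in>Vfams d N. Q V}) \<le> p * real (card (Vfams d N))"
proof -
  define \<pi> where "\<pi> = (\<lambda>V::nat \<Rightarrow> vec. V(j := (\<lambda>k. 0)))"
  define T where "T = \<pi> ` Vfams d N"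
  have fT: "finite T" using finite_Vfams by (simp add: T_def)
  have c0: "cV d \<noteq> 0" using d0 by simp
  have part: "card {V\<in>Vfams d N. R V} = (\<Sum>W\<in>T. card {V\<in>Vfams d N. \<pi> V = W \<and> R V})" for R
  proof -
    have "card {V\<in>Vfams d N. R V} = (\<Sum>V\<in>{V\<in>Vfams d N. R V}. 1)" by simp
    also have "\<dots> = (\<Sum>W\<in>T. \<Sum>V\<in>{x\<in>{V\<in>Vfams d N. R V}. \<pi> x = W}. 1)"
      by (rule sum.group[symmetric]) (use fT finite_Vfams in \<open>auto simp: T_def\<close>)
    also have "\<dots> = (\<Sum>W\<in>T. card {V\<in>Vfams d N. \<pi> V = W \<and> R V})"
      by (intro sum.cong refl) (simp add: conj_commute conj_left_commute)
    finally show ?thesis .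
  qed
  have fib: "W \<in> T \<Longrightarrow> \<exists>V0\<in>Vfams d N. card {V\<in>Vfams d N. \<pi> V = W \<and> R V} = card {u\<in>cube d (cV d). R (V0(j := u))}" for W R
    unfolding T_def \<pi>_def using fiber_card[OF j] by blast
  have "real (card {V\<in>Vfams d N. Q V}) = (\<Sum>W\<in>T. real (card {V\<in>Vfams d N. \<pi> V = W \<and> Q V}))"
    by (simp add: part[of Q])
  also have "\<dots> \<le> (\<Sum>W\<in>T. p * 2^d)"
  proof (rule sum_mono)
    fix W assume "W \<in> T"
    then obtain V0 where "V0 \<in> Vfams d N" "card {V\<in>Vfams d N. \<pi> V = W \<and> Q V} = card {u\<in>cube d (cV d). Q (V0(j := u))}"
      using fib[of W Q] by blast
    thus "real (card {V\<in>Vfams d N. \<pi> V = W \<and> Q V}) \<le> p * 2^d" using bound by simp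
  qed
  also have "\<dots> = p * (\<Sum>W\<in>T. real (card {V\<in>Vfams d N. \<pi> V = W \<and> True}))"
  proof -
    have "card {V\<in>Vfams d N. \<pi> V = W \<and> True} = 2^d" if "W \<in> T" for W
    proof -
      from fib[of W "\<lambda>_. True"] that obtain V0 where "card {V\<in>Vfams d N. \<pi> V = W \<and> True} = card {u\<in>cube d (cV d). True}"
        by blast
      thus ?thesis using card_cube[OF c0] by simp
    qed
    thus ?thesis by (simp add: sum_distrib_left)
  qed
  also have "\<dots> = p * real (card (Vfams d N))" using part[of "\<lambda>_. True"] by simp
  finally show ?thesis .
qed

lemma count_Omega:
  assumes j: "1 \<le> j" "j \<le> NN \<delta> d" and d0: "d > 0"
    and bound: "\<And>A V. A \<in> Amats d \<Longrightarrow> V \<in> Vfams d (NN \<delta> d) \<Longrightarrow>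
                  real (card {u\<in>cube d (cV d). P A (V(j := u))}) \<le> p * 2^d"
  shows "real (card {\<omega>\<in>Omega \<delta> d. P (fst \<omega>) (snd \<omega>)}) \<le> p * real (card (Omega \<delta> d))"
proof -
  have e: "{\<omega>\<in>Omega \<delta> d. P (fst \<omega>) (snd \<omega>)} = Sigma (Amats d) (\<lambda>A. {V\<in>Vfams d (NN \<delta> d). P A V})"
    by (auto simp: Omega_def)
  have "real (card {\<omega>\<in>Omega \<delta> d. P (fst \<omega>) (snd \<omega>)}) = (\<Sum>A\<in>Amats d. real (card {V\<in>Vfams d (NN \<delta> d). P A V}))"
    unfolding e using finite_Amats finite_Vfams by (simp add: card_SigmaI)
  also have "\<dots> \<le> (\<Sum>A\<in>Amats d. p * real (card (Vfams d (NN \<delta> d))))"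
    by (intro sum_mono count_Vfams[OF j d0]) (use bound in auto)
  also have "\<dots> = p * real (card (Omega \<delta> d))"
    by (simp add: Omega_def card_cartesian_product)
  finally show ?thesis .
qed

lemma cV_sq: "d > 0 \<Longrightarrow> (cV d)\<^sup>2 = 1 / real d"
  by (simp add: power_divide)

lemma cV_nz: "d > 0 \<Longrightarrow> cV d \<noteq> 0" by simp

lemma card_UN_bound:
  assumes "finite I" "\<And>a. a \<in> I \<Longrightarrow> real (card (S a)) \<le> c"
  shows "real (card (\<Union>a\<in>I. S a)) \<le> real (card I) * c"
proof -
  have "card (\<Union>a\<in>I. S a) \<le> (\<Sum>a\<in>I. card (S a))" by (rule card_UN_le[OF assms(1)])
  hence "real (card (\<Union>a\<in>I. S a)) \<le> (\<Sum>a\<in>I. real (card (S a)))" by (metis of_nat_le_iff of_nat_sum)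
  also have "\<dots> \<le> (\<Sum>a\<in>I. c)" by (intro sum_mono assms(2))
  also have "\<dots> = real (card I) * c" by simp
  finally show ?thesis .
qed

lemma card_diff_real:
  assumes "finite A" "finite B"
  shows "real (card A) - real (card B) \<le> real (card (A - B))"
proof -
  have "A \<subseteq> (A - B) \<union> (A \<inter> B)" by auto
  hence "card A \<le> card ((A - B) \<union> (A \<inter> B))" using assms by (intro card_mono) auto
  also have "\<dots> \<le> card (A - B) + card (A \<inter> B)" by (rule card_Un_le)
  also have "card (A \<inter> B) \<le> card B" using assms by (intro card_mono) auto
  finally show ?thesis by linarith
qed

lemma card_filter_sum: "finite S \<Longrightarrow> real (card {x\<in>S. P x}) = (\<Sum>x\<in>S. if P x then 1 else 0)"
  by (simp add: sum.inter_filter[symmetric])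

lemma double_count:
  assumes "finite I" "finite S"
  shows "(\<Sum>i\<in>I. real (card {x\<in>S. P i x})) = (\<Sum>x\<in>S. real (card {i\<in>I. P i x}))"
  using assms by (simp add: card_filter_sum sum.swap[of _ I])

lemma corr_time_le:
  assumes "corr_time \<delta> d T alg A V i \<noteq> \<infinity>"
  shows "corr_time \<delta> d T alg A V i \<le> enat T"
proof -
  define C where "C = (\<lambda>t. 1 \<le> t \<and> t \<le> T \<and>
                  \<bar>ip d (query alg (fo_oracle \<delta> d A V) t) (V i)\<bar> \<ge> gam \<delta> d / 4 \<and>
                  Ainf d A (query alg (fo_oracle \<delta> d A V) t) \<le> 2 / LL d)"
  have ct: "corr_time \<delta> d T alg A V i = (if \<exists>t. C t then enat (LEAST t. C t) else \<infinity>)"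
    by (simp only: corr_time_def C_def Let_def)
  have ex: "\<exists>t. C t" using assms ct by (auto split: if_splits)
  have "C (LEAST t. C t)" by (rule LeastI_ex[OF ex])
  thus ?thesis using ct ex by (simp add: C_def)
qed

lemma opt_corr:
  fixes TT :: nat
  assumes opt: "eps_optimal_out \<delta> d TT alg A V"
    and y: "y \<in> unit_ball d" "Ainf d A y = 0" "\<And>m. 1 \<le> m \<Longrightarrow> m \<le> NN \<delta> d \<Longrightarrow> ip d (V m) y \<le> -1/(9* sqrt(NN \<delta> d))"
    and N1: "NN \<delta> d \<ge> 1" and g: "0 < gam \<delta> d" "gam \<delta> d \<le> 1/2"
    and A3: "real (NN \<delta> d) * gam \<delta> d + sqrt d / (real d)^2 \<le> 1/(9* sqrt(NN \<delta> d))"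
    and A4: "sqrt d / (real d)^2 < gam \<delta> d" and d0: "d > 0" and T1: "TT \<ge> 1"
  shows "corr_time \<delta> d TT alg A V (NN \<delta> d) \<noteq> \<infinity>"
proof -
  define N where "N = NN \<delta> d"
  define \<gamma> where "\<gamma> = gam \<delta> d"
  define L where "L = LL d"
  define x where "x = query alg (fo_oracle \<delta> d A V) TT"
  define e where "e = sqrt d / (real d)^2"
  define K where "K = 1 / (sqrt (real d) * L)"
  have L0: "L > 0" by (simp add: L_def LL_pos)
  have K0: "K > 0" using L0 d0 by (simp add: K_def)
  define mx where "mx = max (L * Ainf d A x - 1) (vmax \<delta> d V x)"
  define my where "my = max (L * Ainf d A y - 1) (vmax \<delta> d V y)"
  have Fx: "Fhard \<delta> d A V x = K * mx" by (simp add: Fhard_def K_def mx_def L_def)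
  have Fy: "Fhard \<delta> d A V y = K * my" by (simp add: Fhard_def K_def my_def L_def)
  have eK: "epsopt d = K * e"
    using d0 L0 by (simp add: epsopt_def K_def e_def L_def power2_eq_square field_simps)
  have "K * mx \<le> K * my + K * e" using opt y(1) Fx Fy eK by (auto simp: eps_optimal_out_def x_def)
  hence mxy: "mx \<le> my + e" using K0 by (simp add: distrib_left[symmetric])
  have sN: "sqrt N \<ge> 1" using N1 by (simp add: N_def)
  define B where "B = - 1/(9* sqrt N) - \<gamma>"
  have "\<forall>z\<in>(\<lambda>m. ip d (V m) y - real m * gam \<delta> d) ` {1..NN \<delta> d}. z \<le> B"
  proof
    fix z assume "z \<in> (\<lambda>m. ip d (V m) y - real m * gam \<delta> d) ` {1..NN \<delta> d}"
    then obtain m where m: "1 \<le> m" "m \<le> NN \<delta> d" and z: "z = ip d (V m) y - real m * gam \<delta> d" by auto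
    have "real m * gam \<delta> d \<ge> 1 * gam \<delta> d" using m g by (intro mult_right_mono) auto
    thus "z \<le> B" using y(3)[OF m] z by (simp add: B_def N_def \<gamma>_def)
  qed
  hence vy: "vmax \<delta> d V y \<le> B" unfolding vmax_def by (subst Max_le_iff) (use N1 in auto)
  have Bge: "B \<ge> -1"
  proof -
    have "1/(9* sqrt N) \<le> 1/9" using sN by (simp add: field_simps)
    thus ?thesis using g by (simp add: B_def \<gamma>_def)
  qed
  have my: "my \<le> B" using vy Bge y(2) by (simp add: my_def)
  have mxB: "mx \<le> B + e" using mxy my by linarith
  have Bneg: "B + e < 0" using A4 sN by (simp add: B_def e_def \<gamma>_def) (smt (verit) divide_nonneg_nonneg of_nat_0_le_iff real_sqrt_ge_zero)
  have Ax: "Ainf d A x \<le> 2 / L"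
  proof -
    have "L * Ainf d A x - 1 < 0" using mxB Bneg by (simp add: mx_def)
    hence "L * Ainf d A x < 1" by simp
    hence "Ainf d A x < 1 / L" using L0 by (simp add: field_simps)
    also have "1 / L \<le> 2 / L" using L0 by (simp add: divide_right_mono)
    finally show ?thesis by simp
  qed
  have vx: "vmax \<delta> d V x \<ge> ip d (V N) x - real N * \<gamma>"
    unfolding vmax_def N_def \<gamma>_def by (rule Max_ge) (use N1 in auto)
  have corr: "\<bar>ip d x (V N)\<bar> \<ge> \<gamma> / 4"
  proof (rule ccontr)
    assume "\<not> ?thesis"
    hence "ip d (V N) x > - \<gamma>/4" by (simp add: ip_sym[of d x] abs_less_iff)
    hence "vmax \<delta> d V x > - \<gamma>/4 - real N * \<gamma>" using vx by linarith
    moreover have "vmax \<delta> d V x \<le> B + e" using mxB by (simp add: mx_def)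
    ultimately have "1/(9* sqrt N) < real N * \<gamma> - 3/4 * \<gamma> + e" by (simp add: B_def)
    moreover have "real N * \<gamma> + e \<le> 1/(9* sqrt N)" using A3 by (simp add: N_def \<gamma>_def e_def)
    ultimately show False using g by (simp add: \<gamma>_def)
  qed
  have C: "1 \<le> TT \<and> TT \<le> TT \<and> \<bar>ip d (query alg (fo_oracle \<delta> d A V) TT) (V N)\<bar> \<ge> gam \<delta> d / 4 \<and>
           Ainf d A (query alg (fo_oracle \<delta> d A V) TT) \<le> 2 / LL d"
    using T1 corr Ax by (simp add: x_def \<gamma>_def L_def)
  show ?thesis unfolding corr_time_def Let_def N_def[symmetric] using C by (auto split: if_splits)
qed

lemma ev_real: "eventually P at_top \<Longrightarrow> eventually (\<lambda>n. P (real n)) sequentially"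
  using filterlim_real_sequentially unfolding filterlim_iff by blast

lemma asym:
  fixes \<delta> :: real and T :: "nat \<Rightarrow> nat"
  assumes \<delta>: "0 < \<delta>" "\<delta> < 1"
    and Tl: "((\<lambda>d. ln (real (T d)) / ln (real d)) \<longlongrightarrow> 1 + \<delta> / 6) sequentially"
  shows "\<exists>d0. \<forall>d\<ge>d0. 2 \<le> d \<and> 20 \<le> NN \<delta> d \<and> 0 < gam \<delta> d \<and> gam \<delta> d \<le> 1/2
      \<and> real (NN \<delta> d) * gam \<delta> d + sqrt d / (real d)^2 \<le> 1 / (9 * sqrt (NN \<delta> d))
      \<and> sqrt d / (real d)^2 < gam \<delta> d
      \<and> real (NN \<delta> d) * (16 / real d) \<le> 1/180
      \<and> real (NN \<delta> d) * real (NN \<delta> d) * (2 * exp (- real d / (128 * (real (NN \<delta> d))^2))) \<le> 1/180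
      \<and> real (NN \<delta> d) * real (NN \<delta> d) * real (T d) * (2 * exp (- real d * (gam \<delta> d)^2 / 32)) \<le> 1/180
      \<and> 1 \<le> T d"
proof -
  define M where "M = (\<lambda>x::real. x powr (\<delta>/6) / ln x ^ 4)"
  define g where "g = (\<lambda>x::real. ln x ^ 2 / x powr (\<delta>/4))"
  define e where "e = (\<lambda>x::real. sqrt x / x^2)"
  have l1: "filterlim M at_top at_top" unfolding M_def using \<delta> by real_asymp
  have l2: "(g \<longlongrightarrow> 0) at_top" unfolding g_def using \<delta> by real_asymp
  have l3: "((\<lambda>x. 9 * (M x * g x + e x) * sqrt (M x)) \<longlongrightarrow> 0) at_top"
    unfolding M_def g_def e_def using \<delta> by real_asymp
  have l4: "((\<lambda>x. e x / g x) \<longlongrightarrow> 0) at_top" unfolding g_def e_def using \<delta> by real_asymp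
  have l5: "((\<lambda>x. 16 * M x / x) \<longlongrightarrow> 0) at_top" unfolding M_def using \<delta> by real_asymp
  have l6: "((\<lambda>x. (M x)^2 * 2 * exp (- x / (128 * (M x)^2))) \<longlongrightarrow> 0) at_top"
    unfolding M_def using \<delta> by real_asymp
  have l7: "((\<lambda>x. (M x)^2 * x^2 * 2 * exp (- x * (g x)^2 / 32)) \<longlongrightarrow> 0) at_top"
    unfolding M_def g_def using \<delta> by real_asymp
  have ev: "eventually (\<lambda>x. 21 \<le> M x \<and> g x < 1/2 \<and> 9 * (M x * g x + e x) * sqrt (M x) < 1 \<and>
      e x / g x < 1 \<and> 16 * M x / x < 1/180 \<and> (M x)^2 * 2 * exp (- x / (128 * (M x)^2)) < 1/180 \<and>
      (M x)^2 * x^2 * 2 * exp (- x * (g x)^2 / 32) < 1/180) at_top"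
  proof (intro eventually_conj)
    show "eventually (\<lambda>x. 21 \<le> M x) at_top" using l1 by (simp add: filterlim_at_top)
    show "eventually (\<lambda>x. g x < 1/2) at_top" using order_tendstoD(2)[OF l2, of "1/2"] by simp
    show "eventually (\<lambda>x. 9 * (M x * g x + e x) * sqrt (M x) < 1) at_top" using order_tendstoD(2)[OF l3, of 1] by simp
    show "eventually (\<lambda>x. e x / g x < 1) at_top" using order_tendstoD(2)[OF l4, of 1] by simp
    show "eventually (\<lambda>x. 16 * M x / x < 1/180) at_top" using order_tendstoD(2)[OF l5, of "1/180"] by simp
    show "eventually (\<lambda>x. (M x)^2 * 2 * exp (- x / (128 * (M x)^2)) < 1/180) at_top"
      using order_tendstoD(2)[OF l6, of "1/180"] by simp
    show "eventually (\<lambda>x. (M x)^2 * x^2 * 2 * exp (- x * (g x)^2 / 32) < 1/180) at_top"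
      using order_tendstoD(2)[OF l7, of "1/180"] by simp
  qed
  have evT: "eventually (\<lambda>d. 1 < ln (real (T d)) / ln (real d) \<and> ln (real (T d)) / ln (real d) < 2) sequentially"
    by (rule eventually_conj[OF order_tendstoD(1)[OF Tl] order_tendstoD(2)[OF Tl]]) (use \<delta> in auto)
  have evall: "eventually (\<lambda>d. (21 \<le> M d \<and> g d < 1/2 \<and> 9 * (M d * g d + e d) * sqrt (M d) < 1 \<and>
      e d / g d < 1 \<and> 16 * M d / d < 1/180 \<and> (M d)^2 * 2 * exp (- real d / (128 * (M d)^2)) < 1/180 \<and>
      (M d)^2 * (real d)^2 * 2 * exp (- real d * (g d)^2 / 32) < 1/180) \<and>
      (1 < ln (real (T d)) / ln (real d) \<and> ln (real (T d)) / ln (real d) < 2) \<and> 2 \<le> d) sequentially"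
    by (rule eventually_conj[OF ev_real[OF ev] eventually_conj[OF evT eventually_ge_at_top]])
  then obtain d0 where d0: "\<And>d. d \<ge> d0 \<Longrightarrow> (21 \<le> M d \<and> g d < 1/2 \<and> 9 * (M d * g d + e d) * sqrt (M d) < 1 \<and>
      e d / g d < 1 \<and> 16 * M d / d < 1/180 \<and> (M d)^2 * 2 * exp (- real d / (128 * (M d)^2)) < 1/180 \<and>
      (M d)^2 * (real d)^2 * 2 * exp (- real d * (g d)^2 / 32) < 1/180) \<and>
      (1 < ln (real (T d)) / ln (real d) \<and> ln (real (T d)) / ln (real d) < 2) \<and> 2 \<le> d"
    unfolding eventually_sequentially by blast
  show ?thesis
  proof (intro exI allI impI)
    fix d :: nat assume "d \<ge> d0"
    note h = d0[OF this]
    have h5: "16 * M d / d < 1/180" and h6: "(M d)^2 * 2 * exp (- real d / (128 * (M d)^2)) < 1/180"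
      and h7: "(M d)^2 * (real d)^2 * 2 * exp (- real d * (g d)^2 / 32) < 1/180" using h by blast+
    define Mv where "Mv = M d"
    define N where "N = NN \<delta> d"
    have NM: "N = nat \<lfloor>Mv\<rfloor>" by (simp add: N_def NN_def Mv_def M_def)
    have gg: "gam \<delta> d = g d" by (simp add: gam_def g_def)
    have Mv21: "21 \<le> Mv" using h by (simp add: Mv_def)
    have NleM: "real N \<le> Mv" using Mv21 NM by (simp add: of_nat_nat)
    have N21: "N \<ge> 21" using Mv21 NM by (simp add: le_nat_floor)
    have d2: "2 \<le> d" using h by simp
    have lnd: "ln (real d) > 0" using d2 by simp
    have g0: "g d > 0" using lnd d2 by (simp add: g_def)
    have N0: "real N > 0" using N21 by simp
    have A3: "real N * g d + e d \<le> 1 / (9 * sqrt N)"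
    proof -
      have "real N * g d + e d \<le> Mv * g d + e d" using NleM g0 by (simp add: mult_right_mono)
      also have "\<dots> < 1 / (9 * sqrt Mv)"
      proof -
        have "9 * (Mv * g d + e d) * sqrt Mv < 1" using h by (simp add: Mv_def)
        moreover have "sqrt Mv > 0" using Mv21 by simp
        ultimately show ?thesis by (simp add: field_simps)
      qed
      also have "\<dots> \<le> 1 / (9 * sqrt N)" using NleM N0 by (intro divide_left_mono mult_left_mono real_sqrt_le_mono) auto
      finally show ?thesis by simp
    qed
    have A4: "e d < g d" using h g0 by (simp add: divide_less_eq)
    have A5: "real N * (16 / real d) \<le> 1/180"
    proof -
      have "real N * (16 / real d) \<le> Mv * (16 / real d)" using NleM by (intro mult_right_mono) auto
      also have "\<dots> = 16 * Mv / d" by simp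
      also have "\<dots> < 1/180" using h5 unfolding Mv_def .
      finally show ?thesis by simp
    qed
    have A6: "real N * real N * (2 * exp (- real d / (128 * (real N)^2))) \<le> 1/180"
    proof -
      have NN2: "(real N)^2 \<le> Mv^2" using NleM N0 by (intro power_mono) auto
      have "- real d / (128 * (real N)^2) \<le> - real d / (128 * Mv^2)"
        using NN2 N0 by (simp add: frac_le)
      hence "exp (- real d / (128 * (real N)^2)) \<le> exp (- real d / (128 * Mv^2))" by simp
      hence E: "2 * exp (- real d / (128 * (real N)^2)) \<le> 2 * exp (- real d / (128 * Mv^2))" by simp
      have NN3: "real N * real N \<le> Mv^2" using NN2 by (simp add: power2_eq_square)
      have "real N * real N * (2 * exp (- real d / (128 * (real N)^2))) \<le> Mv^2 * (2 * exp (- real d / (128 * Mv^2)))"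
        by (rule mult_mono[OF NN3 E]) auto
      also have "\<dots> = Mv^2 * 2 * exp (- real d / (128 * Mv^2))" by simp
      also have "\<dots> < 1/180" using h6 unfolding Mv_def .
      finally show ?thesis by simp
    qed
    have lnT: "1 < ln (real (T d)) / ln (real d)" "ln (real (T d)) / ln (real d) < 2" using h by auto
    have lnT1: "ln (real (T d)) > ln (real d)" using lnT(1) lnd by (simp add: less_divide_eq)
    have T0: "T d > 0"
    proof (rule ccontr)
      assume "\<not> ?thesis" hence "T d = 0" by simp
      thus False using lnT1 lnd by simp
    qed
    have T1: "T d \<ge> 1" using T0 by simp
    have Td2: "real (T d) \<le> (real d)^2"
    proof -
      have "ln (real (T d)) < 2 * ln (real d)" using lnT(2) lnd by (simp add: divide_less_eq)
      also have "2 * ln (real d) = ln ((real d)^2)" using d2 by (simp add: ln_realpow)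
      finally have "ln (real (T d)) < ln ((real d)^2)" .
      thus ?thesis using T0 d2 by simp
    qed
    have A7: "real N * real N * real (T d) * (2 * exp (- real d * (g d)^2 / 32)) \<le> 1/180"
    proof -
      have NN2: "real N * real N \<le> Mv^2" using NleM N0 by (simp add: power2_eq_square mult_mono)
      have "real N * real N * real (T d) * (2 * exp (- real d * (g d)^2 / 32)) \<le> Mv^2 * (real d)^2 * (2 * exp (- real d * (g d)^2 / 32))"
        using NN2 Td2 by (intro mult_right_mono mult_mono) auto
      also have "\<dots> = (M d)^2 * (real d)^2 * 2 * exp (- real d * (g d)^2 / 32)" by (simp add: Mv_def)
      also have "\<dots> < 1/180" using h7 .
      finally show ?thesis by simp
    qed
    show "2 \<le> d \<and> 20 \<le> NN \<delta> d \<and> 0 < gam \<delta> d \<and> gam \<delta> d \<le> 1/2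
      \<and> real (NN \<delta> d) * gam \<delta> d + sqrt d / (real d)^2 \<le> 1 / (9 * sqrt (NN \<delta> d))
      \<and> sqrt d / (real d)^2 < gam \<delta> d
      \<and> real (NN \<delta> d) * (16 / real d) \<le> 1/180
      \<and> real (NN \<delta> d) * real (NN \<delta> d) * (2 * exp (- real d / (128 * (real (NN \<delta> d))^2))) \<le> 1/180
      \<and> real (NN \<delta> d) * real (NN \<delta> d) * real (T d) * (2 * exp (- real d * (gam \<delta> d)^2 / 32)) \<le> 1/180
      \<and> 1 \<le> T d"
      using d2 N21 g0 h A3 A4 A5 A6 A7 T1 unfolding gg N_def[symmetric] e_def by auto
  qed
qed

lemma gaps:
  fixes a :: "nat \<Rightarrow> real" and N :: nat and TT :: real
  assumes N: "N \<ge> 2" and mono: "\<And>i. 1 \<le> i \<Longrightarrow> i \<le> N - 1 \<Longrightarrow> a i \<le> a (i+1)"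
    and a1: "a 1 \<ge> 0" and aN: "a N \<le> TT" and TT: "TT > 0"
  shows "real (card {i\<in>{1..N-1}. a (i+1) - a i \<le> 20 * TT / N}) \<ge> real (N - 1) - real N / 20"
proof -
  define B where "B = {i\<in>{1..N-1}. a (i+1) - a i > 20 * TT / N}"
  have tel: "(\<Sum>i\<in>{1..N-1}. a (Suc i) - a i) = a N - a 1"
    using sum_Suc_diff[of 1 "N-1" a] N by (simp add: Suc_diff_1)
  have Bsub: "B \<subseteq> {1..N-1}" by (auto simp: B_def)
  have sB: "(\<Sum>i\<in>B. a (i+1) - a i) \<le> (\<Sum>i\<in>{1..N-1}. a (Suc i) - a i)"
  proof -
    have "(\<Sum>i\<in>B. a (Suc i) - a i) \<le> (\<Sum>i\<in>{1..N-1}. a (Suc i) - a i)"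
      by (rule sum_mono2) (use Bsub mono in auto)
    thus ?thesis by simp
  qed
  have cB: "real (card B) \<le> real N / 20"
  proof (cases "B = {}")
    case True thus ?thesis by simp
  next
    case False
    have fB: "finite B" using Bsub finite_subset by blast
    have "real (card B) * (20 * TT / N) = (\<Sum>i\<in>B. 20 * TT / N)" by simp
    also have "\<dots> < (\<Sum>i\<in>B. a (i+1) - a i)"
      using False fB by (intro sum_strict_mono) (auto simp: B_def)
    also have "\<dots> \<le> TT" using sB tel a1 aN by simp
    finally have "real (card B) * (20 * TT / N) < TT" .
    hence "real (card B) * 20 < N" using TT N by (simp add: field_simps)
    thus ?thesis by simp
  qed
  have "{i\<in>{1..N-1}. a (i+1) - a i \<le> 20 * TT / N} = {1..N-1} - B" by (auto simp: B_def)
  hence "card {i\<in>{1..N-1}. a (i+1) - a i \<le> 20 * TT / N} = card {1..N-1} - card B"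
    using Bsub by (simp add: card_Diff_subset finite_subset)
  moreover have "card B \<le> card {1..N-1}" using Bsub by (intro card_mono) auto
  ultimately have "real (card {i\<in>{1..N-1}. a (i+1) - a i \<le> 20 * TT / N}) = real (N - 1) - real (card B)"
    by (simp add: of_nat_diff)
  thus ?thesis using cB by simp
qed

definition qsA :: "nat \<Rightarrow> (nat \<Rightarrow> vec) \<Rightarrow> vec list" where
  "qsA d A = gs d (map A [0..<d div 2])"

lemma good_omega:
  fixes TT :: nat
  assumes d2: "2 \<le> d" and N20: "20 \<le> NN \<delta> d" and g0: "0 < gam \<delta> d" "gam \<delta> d \<le> 1/2"
    and A3: "real (NN \<delta> d) * gam \<delta> d + sqrt d / (real d)^2 \<le> 1 / (9 * sqrt (NN \<delta> d))"
    and A4: "sqrt d / (real d)^2 < gam \<delta> d" and T1: "1 \<le> TT"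
    and valid: "valid_alg d alg" and AV: "A \<in> Amats d" "V \<in> Vfams d (NN \<delta> d)"
    and opt: "eps_optimal_out \<delta> d TT alg A V"
    and noG: "\<And>i j t. i \<in> {1..NN \<delta> d} \<Longrightarrow> j \<in> {1..NN \<delta> d} \<Longrightarrow> t \<in> {1..TT} \<Longrightarrow> i < j \<Longrightarrow>
       \<bar>ip d (query alg (fo_oracle \<delta> d A (trunc i V)) t) (V j)\<bar> < gam \<delta> d / 4"
    and noHa: "\<And>i. i \<in> {1..NN \<delta> d} \<Longrightarrow> (\<Sum>r<length (qsA d A). (ip d (qsA d A ! r) (V i))\<^sup>2) \<le> 3/4"
    and noHb: "\<And>i j. i \<in> {1..NN \<delta> d} \<Longrightarrow> j \<in> {1..NN \<delta> d} \<Longrightarrow> i \<noteq> j \<Longrightarrow>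
       \<bar>ip d (V j) (proj d (qsA d A) (V i))\<bar> \<le> 1 / (8 * NN \<delta> d)"
  shows "(\<forall>i\<in>{1..NN \<delta> d}. corr_time \<delta> d TT alg A V i \<noteq> \<infinity>) \<and>
         (\<forall>i\<in>{1..NN \<delta> d - 1}. corr_time \<delta> d TT alg A V i < corr_time \<delta> d TT alg A V (i+1))"
proof -
  define N where "N = NN \<delta> d"
  define qs where "qs = qsA d A"
  have d0: "d > 0" using d2 by simp
  have gp: "orthon d qs" "length qs \<le> d div 2" "\<forall>a\<in>set (map A [0..<d div 2]). spans d qs a"
    using gs_props[of d "map A [0..<d div 2]"] by (auto simp: qs_def qsA_def)
  obtain y where y: "\<forall>k\<ge>d. y k = 0" "ip d y y = 1" "\<forall>a. spans d qs a \<longrightarrow> ip d a y = 0"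
      "\<forall>i\<in>{1..N}. ip d (V i) y \<le> - 1 / (9 * sqrt N)"
  proof -
    have "\<exists>y. (\<forall>k\<ge>d. y k = 0) \<and> ip d y y = 1 \<and> (\<forall>a. spans d qs a \<longrightarrow> ip d a y = 0) \<and>
             (\<forall>i\<in>{1..N}. ip d (V i) y \<le> - 1 / (9 * sqrt N))"
    proof (rule good_direction[OF gp(1)])
      show "N \<ge> 1" using N20 by (simp add: N_def)
      show "ip d (V i) (V i) = 1" if "i \<in> {1..N}" for i using Vfams_norm[OF AV(2)] that d0 by (simp add: N_def)
      show "(\<Sum>r<length qs. (ip d (qs!r) (V i))\<^sup>2) \<le> 3/4" if "i \<in> {1..N}" for i
        using noHa that by (simp add: qs_def N_def)
      show "\<bar>ip d (V j) (proj d qs (V i))\<bar> \<le> 1 / (8 * N)" if "i \<in> {1..N}" "j \<in> {1..N}" "i \<noteq> j" for i j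
        using noHb that by (simp add: qs_def N_def)
    qed
    thus ?thesis using that by blast
  qed
  have yb: "y \<in> unit_ball d" using y(1,2) by (simp add: unit_ball_def ip_def power2_eq_square)
  have Ay: "Ainf d A y = 0"
  proof -
    have "ip d (A j) y = 0" if "j < d div 2" for j
      using y(3) gp(3) that by auto
    hence "(\<lambda>j. \<bar>ip d (A j) y\<bar>) ` {..<d div 2} = (\<lambda>j. 0) ` {..<d div 2}" by (intro image_cong) auto
    also have "\<dots> = {0}"
    proof -
      have "0 \<in> {..<d div 2}" using d2 by simp
      thus ?thesis by (auto simp: image_constant_conv)
    qed
    finally have "(\<lambda>j. \<bar>ip d (A j) y\<bar>) ` {..<d div 2} = {0}" .
    thus ?thesis by (simp add: Ainf_def)
  qed
  have tN: "corr_time \<delta> d TT alg A V N \<noteq> \<infinity>"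
    unfolding N_def
  proof (rule opt_corr[OF opt yb Ay _ _ g0 A3 A4 d0 T1])
    show "ip d (V m) y \<le> -1 / (9 * sqrt (NN \<delta> d))" if "1 \<le> m" "m \<le> NN \<delta> d" for m
      using y(4) that by (simp add: N_def)
    show "1 \<le> NN \<delta> d" using N20 by simp
  qed
  have ord: "corr_time \<delta> d TT alg A V i < corr_time \<delta> d TT alg A V (i+1)"
    if i: "1 \<le> i" "i + 1 \<le> N" and fin: "corr_time \<delta> d TT alg A V (i+1) \<noteq> \<infinity>" for i
  proof (rule corr_order[OF valid AV(2) d0 g0(1) i(1) _ _ fin])
    show "i + 1 \<le> NN \<delta> d" using i by (simp add: N_def)
    fix t j assume "1 \<le> t" "t \<le> TT" "i < j" "j \<le> NN \<delta> d"
    thus "\<bar>ip d (query alg (fo_oracle \<delta> d A (trunc i V)) t) (V j)\<bar> < gam \<delta> d / 4"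
      using noG[of i j t] i by (auto simp: N_def)
  qed
  have fin: "corr_time \<delta> d TT alg A V (N - k) \<noteq> \<infinity>" if "k < N" for k
    using that
  proof (induction k)
    case 0 thus ?case using tN by simp
  next
    case (Suc k)
    have "corr_time \<delta> d TT alg A V (N - Suc k) < corr_time \<delta> d TT alg A V (N - Suc k + 1)"
      by (rule ord) (use Suc in \<open>auto simp: Suc_diff_Suc\<close>)
    thus ?case by (metis enat_ord_simps(6))
  qed
  have allfin: "\<forall>i\<in>{1..N}. corr_time \<delta> d TT alg A V i \<noteq> \<infinity>"
  proof
    fix i assume "i \<in> {1..N}"
    hence "N - (N - i) = i" "N - i < N" by auto
    thus "corr_time \<delta> d TT alg A V i \<noteq> \<infinity>" using fin[of "N - i"] by metis
  qed
  moreover have "\<forall>i\<in>{1..N - 1}. corr_time \<delta> d TT alg A V i < corr_time \<delta> d TT alg A V (i+1)"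
  proof
    fix i assume i: "i \<in> {1..N - 1}"
    show "corr_time \<delta> d TT alg A V i < corr_time \<delta> d TT alg A V (i+1)"
      by (rule ord) (use i allfin in auto)
  qed
  ultimately show ?thesis by (simp add: N_def)
qed

lemma trunc_upd: "i < j \<Longrightarrow> trunc i (V(j := u)) = trunc i V"
  by (auto simp: trunc_def fun_eq_iff)

lemma tail_G:
  assumes d0: "d > 0" and xx: "ip d x x \<le> 1" and g0: "gam \<delta> d > 0"
  shows "real (card {u\<in>cube d (cV d). \<bar>ip d x u\<bar> \<ge> gam \<delta> d / 4}) \<le> 2 * exp (- real d * (gam \<delta> d)^2 / 32) * 2^d"
proof -
  have "real (card {u\<in>cube d (cV d). \<bar>\<Sum>k<d. x k * u k\<bar> \<ge> gam \<delta> d / 4})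
        \<le> 2 * 2^d * exp (- (gam \<delta> d / 4)\<^sup>2 / (2 * (cV d)\<^sup>2 * 1))"
    by (rule cube_tail) (use d0 g0 xx in \<open>auto simp: ip_def power2_eq_square\<close>)
  also have "- (gam \<delta> d / 4)\<^sup>2 / (2 * (cV d)\<^sup>2 * 1) = - real d * (gam \<delta> d)^2 / 32"
    using d0 by (simp add: cV_sq power2_eq_square field_simps)
  finally show ?thesis by (simp add: ip_def mult_ac)
qed

lemma tail_Hb:
  assumes d0: "d > 0" and xx: "ip d x x \<le> 1" and N0: "N > 0"
  shows "real (card {u\<in>cube d (cV d). \<bar>ip d u x\<bar> > 1 / (8 * real N)}) \<le> 2 * exp (- real d / (128 * (real N)^2)) * 2^d"
proof -
  have sub: "{u\<in>cube d (cV d). \<bar>ip d u x\<bar> > 1 / (8 * real N)} \<subseteq> {u\<in>cube d (cV d). \<bar>\<Sum>k<d. x k * u k\<bar> \<ge> 1 / (8 * real N)}"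
    by (auto simp: ip_def mult.commute)
  have "real (card {u\<in>cube d (cV d). \<bar>ip d u x\<bar> > 1 / (8 * real N)}) \<le> real (card {u\<in>cube d (cV d). \<bar>\<Sum>k<d. x k * u k\<bar> \<ge> 1 / (8 * real N)})"
    using sub by (simp add: card_mono)
  also have "\<dots> \<le> 2 * 2^d * exp (- (1 / (8 * real N))\<^sup>2 / (2 * (cV d)\<^sup>2 * 1))"
    by (rule cube_tail) (use d0 N0 xx in \<open>auto simp: ip_def power2_eq_square\<close>)
  also have "- (1 / (8 * real N))\<^sup>2 / (2 * (cV d)\<^sup>2 * 1) = - real d / (128 * (real N)^2)"
    using d0 N0 by (simp add: cV_sq power2_eq_square field_simps)
  finally show ?thesis by (simp add: mult_ac)
qed

lemma prob_ev_eq: "prob_ev \<delta> d (\<lambda>(A, V). P A V) = real (card {\<omega>\<in>Omega \<delta> d. P (fst \<omega>) (snd \<omega>)}) / real (card (Omega \<delta> d))"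
  by (simp add: prob_ev_def split_def)

lemma finite_Omega: "finite (Omega \<delta> d)"
  by (simp add: Omega_def finite_Amats finite_Vfams)

lemma Omega_mem: "\<omega> \<in> Omega \<delta> d \<Longrightarrow> fst \<omega> \<in> Amats d \<and> snd \<omega> \<in> Vfams d (NN \<delta> d)"
  by (auto simp: Omega_def)

lemma main_d:
  fixes TT :: nat
  assumes d2: "2 \<le> d" and N20: "20 \<le> NN \<delta> d" and g0: "0 < gam \<delta> d" "gam \<delta> d \<le> 1/2"
    and A3: "real (NN \<delta> d) * gam \<delta> d + sqrt d / (real d)^2 \<le> 1 / (9 * sqrt (NN \<delta> d))"
    and A4: "sqrt d / (real d)^2 < gam \<delta> d"
    and A5: "real (NN \<delta> d) * (16 / real d) \<le> 1/180"
    and A6: "real (NN \<delta> d) * real (NN \<delta> d) * (2 * exp (- real d / (128 * (real (NN \<delta> d))^2))) \<le> 1/180"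
    and A7: "real (NN \<delta> d) * real (NN \<delta> d) * real TT * (2 * exp (- real d * (gam \<delta> d)^2 / 32)) \<le> 1/180"
    and T1: "1 \<le> TT"
    and valid: "valid_alg d alg"
    and popt: "prob_ev \<delta> d (\<lambda>(A, V). eps_optimal_out \<delta> d TT alg A V) \<ge> 2 / 3"
  shows "\<exists>i \<in> {1..NN \<delta> d - 1}.
                 prob_ev \<delta> d (\<lambda>(A, V).
                    corr_time \<delta> d TT alg A V i \<le> corr_time \<delta> d TT alg A V (i + 1) \<and>
                    corr_time \<delta> d TT alg A V (i + 1) \<le> enat TT \<and>
                    real (the_enat (corr_time \<delta> d TT alg A V (i + 1)))
                      - real (the_enat (corr_time \<delta> d TT alg A V i))
                      \<le> 20 * real TT / real (NN \<delta> d)) \<ge> 3 / 5"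
proof -
  define N where "N = NN \<delta> d"
  define \<gamma> where "\<gamma> = gam \<delta> d"
  define \<Omega> where "\<Omega> = Omega \<delta> d"
  have d0: "d > 0" using d2 by simp
  have fO: "finite \<Omega>" by (simp add: \<Omega>_def finite_Omega)
  define Opt where "Opt = {\<omega>\<in>\<Omega>. eps_optimal_out \<delta> d TT alg (fst \<omega>) (snd \<omega>)}"
  have O0: "real (card \<Omega>) > 0"
  proof (rule ccontr)
    assume "\<not> ?thesis" hence "card \<Omega> = 0" by simp
    thus False using popt by (simp add: prob_ev_eq \<Omega>_def)
  qed
  have cOpt: "real (card Opt) \<ge> 2/3 * real (card \<Omega>)"
    using popt O0 by (simp add: prob_ev_eq Opt_def \<Omega>_def field_simps)
  define pG where "pG = 2 * exp (- real d * \<gamma>^2 / 32)"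
  define BG where "BG i j t = {\<omega>\<in>\<Omega>. i < j \<and> \<bar>ip d (query alg (fo_oracle \<delta> d (fst \<omega>) (trunc i (snd \<omega>))) t) (snd \<omega> j)\<bar> \<ge> \<gamma> / 4}" for i j t
  have cBG: "real (card (BG i j t)) \<le> pG * real (card \<Omega>)" if j: "j \<in> {1..N}" for i j t
  proof -
    have "real (card {\<omega>\<in>Omega \<delta> d. (\<lambda>A V. i < j \<and> \<bar>ip d (query alg (fo_oracle \<delta> d A (trunc i V)) t) (V j)\<bar> \<ge> \<gamma> / 4) (fst \<omega>) (snd \<omega>)})
          \<le> pG * real (card (Omega \<delta> d))"
    proof (rule count_Omega)
      show "1 \<le> j" "j \<le> NN \<delta> d" using j by (auto simp: N_def)
      show "d > 0" by (rule d0)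
      fix A V assume "A \<in> Amats d" "V \<in> Vfams d (NN \<delta> d)"
      show "real (card {u\<in>cube d (cV d). i < j \<and> \<bar>ip d (query alg (fo_oracle \<delta> d A (trunc i (V(j := u)))) t) ((V(j := u)) j)\<bar> \<ge> \<gamma> / 4}) \<le> pG * 2^d"
      proof (cases "i < j")
        case True
        define x where "x = query alg (fo_oracle \<delta> d A (trunc i V)) t"
        have xx: "ip d x x \<le> 1" using valid unit_ball_ip by (auto simp: valid_alg_def x_def query_def)
        have "{u\<in>cube d (cV d). i < j \<and> \<bar>ip d (query alg (fo_oracle \<delta> d A (trunc i (V(j := u)))) t) ((V(j := u)) j)\<bar> \<ge> \<gamma> / 4}
              = {u\<in>cube d (cV d). \<bar>ip d x u\<bar> \<ge> gam \<delta> d / 4}"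
          using True by (simp add: trunc_upd x_def \<gamma>_def)
        thus ?thesis using tail_G[OF d0 xx g0(1)] by (simp add: pG_def \<gamma>_def)
      next
        case False thus ?thesis by (simp add: pG_def)
      qed
    qed
    thus ?thesis by (simp add: BG_def \<Omega>_def)
  qed
  define BGa where "BGa = (\<Union>i\<in>{1..N}. \<Union>j\<in>{1..N}. \<Union>t\<in>{1..TT}. BG i j t)"
  have cBGa: "real (card BGa) \<le> 1/180 * real (card \<Omega>)"
  proof -
    have "real (card BGa) \<le> real (card {1..N}) * (real (card {1..N}) * (real (card {1..TT}) * (pG * real (card \<Omega>))))"
      unfolding BGa_def
      by (intro card_UN_bound) (auto intro!: cBG)
    also have "\<dots> = (real N * real N * real TT * pG) * real (card \<Omega>)" by (simp add: mult_ac)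
    also have "\<dots> \<le> 1/180 * real (card \<Omega>)"
      using A7 O0 by (intro mult_right_mono) (auto simp: N_def pG_def \<gamma>_def)
    finally show ?thesis .
  qed
  define BHa where "BHa i = {\<omega>\<in>\<Omega>. (\<Sum>r<length (qsA d (fst \<omega>)). (ip d (qsA d (fst \<omega>) ! r) (snd \<omega> i))\<^sup>2) > 3/4}" for i
  have cBHa: "real (card (BHa i)) \<le> 16 / real d * real (card \<Omega>)" if i: "i \<in> {1..N}" for i
  proof -
    have "real (card {\<omega>\<in>Omega \<delta> d. (\<lambda>A V. (\<Sum>r<length (qsA d A). (ip d (qsA d A ! r) (V i))\<^sup>2) > 3/4) (fst \<omega>) (snd \<omega>)})
          \<le> 16 / real d * real (card (Omega \<delta> d))"
    proof (rule count_Omega)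
      show "1 \<le> i" "i \<le> NN \<delta> d" using i by (auto simp: N_def)
      show "d > 0" by (rule d0)
      fix A V assume "A \<in> Amats d" "V \<in> Vfams d (NN \<delta> d)"
      define qs where "qs = qsA d A"
      have gp: "orthon d qs" "length qs \<le> d div 2"
        using gs_props[of d "map A [0..<d div 2]"] by (auto simp: qs_def qsA_def)
      have "real (card {u\<in>cube d (cV d). (\<Sum>r<length qs. (ip d (qs ! r) u)\<^sup>2) > 3/4}) \<le> 16 / real d * 2^d"
      proof (rule qf_tail[where q="\<lambda>r. qs ! r"])
        show "ip d (qs ! r) (qs ! s) = (if r = s then 1 else 0)" if "r < length qs" "s < length qs" for r s
          using gp(1) that by (simp add: orthon_def)
        show "d > 0" by (rule d0)
        show "2 * length qs \<le> d" using gp(2) by simp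
        show "(cV d)\<^sup>2 = 1 / real d" using cV_sq[OF d0] .
      qed
      thus "real (card {u\<in>cube d (cV d). (\<Sum>r<length (qsA d A). (ip d (qsA d A ! r) ((V(i := u)) i))\<^sup>2) > 3/4}) \<le> 16 / real d * 2^d"
        by (simp add: qs_def)
    qed
    thus ?thesis by (simp add: BHa_def \<Omega>_def)
  qed
  define BHaa where "BHaa = (\<Union>i\<in>{1..N}. BHa i)"
  have cBHaa: "real (card BHaa) \<le> 1/180 * real (card \<Omega>)"
  proof -
    have "real (card BHaa) \<le> real (card {1..N}) * (16 / real d * real (card \<Omega>))"
      unfolding BHaa_def by (rule card_UN_bound[OF _ cBHa]) auto
    also have "\<dots> = (real N * (16 / real d)) * real (card \<Omega>)" by (simp add: mult_ac)
    also have "\<dots> \<le> 1/180 * real (card \<Omega>)"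
      using A5 O0 by (intro mult_right_mono) (auto simp: N_def)
    finally show ?thesis .
  qed
  define pH where "pH = 2 * exp (- real d / (128 * (real N)^2))"
  define BHb where "BHb i j = {\<omega>\<in>\<Omega>. i \<noteq> j \<and> \<bar>ip d (snd \<omega> j) (proj d (qsA d (fst \<omega>)) (snd \<omega> i))\<bar> > 1 / (8 * real N)}" for i j
  have cBHb: "real (card (BHb i j)) \<le> pH * real (card \<Omega>)" if i: "i \<in> {1..N}" and j: "j \<in> {1..N}" for i j
  proof -
    have "real (card {\<omega>\<in>Omega \<delta> d. (\<lambda>A V. i \<noteq> j \<and> \<bar>ip d (V j) (proj d (qsA d A) (V i))\<bar> > 1 / (8 * real N)) (fst \<omega>) (snd \<omega>)})
          \<le> pH * real (card (Omega \<delta> d))"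
    proof (rule count_Omega)
      show "1 \<le> j" "j \<le> NN \<delta> d" using j by (auto simp: N_def)
      show "d > 0" by (rule d0)
      fix A V assume AV: "A \<in> Amats d" "V \<in> Vfams d (NN \<delta> d)"
      show "real (card {u\<in>cube d (cV d). i \<noteq> j \<and> \<bar>ip d ((V(j := u)) j) (proj d (qsA d A) ((V(j := u)) i))\<bar> > 1 / (8 * real N)}) \<le> pH * 2^d"
      proof (cases "i = j")
        case False
        define qs where "qs = qsA d A"
        define x where "x = proj d qs (V i)"
        have gp: "orthon d qs" using gs_props[of d "map A [0..<d div 2]"] by (auto simp: qs_def qsA_def)
        have xx: "ip d x x \<le> 1"
        proof -
          have "ip d x x = ip d (V i) x" unfolding x_def by (rule proj_proj[OF gp])
          also have "\<dots> = ip d (V i) (V i) - (\<Sum>r<length qs. (ip d (qs!r) (V i))\<^sup>2)"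
            unfolding x_def by (rule proj_self)
          also have "\<dots> \<le> ip d (V i) (V i)" by (simp add: sum_nonneg)
          also have "\<dots> = 1" using Vfams_norm[OF AV(2)] i d0 by (simp add: N_def)
          finally show ?thesis .
        qed
        have N0: "N > 0" using N20 by (simp add: N_def)
        have "{u\<in>cube d (cV d). i \<noteq> j \<and> \<bar>ip d ((V(j := u)) j) (proj d (qsA d A) ((V(j := u)) i))\<bar> > 1 / (8 * real N)}
              = {u\<in>cube d (cV d). \<bar>ip d u x\<bar> > 1 / (8 * real N)}"
          using False by (simp add: x_def qs_def)
        thus ?thesis using tail_Hb[OF d0 xx N0] by (simp add: pH_def)
      next
        case True thus ?thesis by (simp add: pH_def)
      qed
    qed
    thus ?thesis by (simp add: BHb_def \<Omega>_def)
  qed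
  define BHba where "BHba = (\<Union>i\<in>{1..N}. \<Union>j\<in>{1..N}. BHb i j)"
  have cBHba: "real (card BHba) \<le> 1/180 * real (card \<Omega>)"
  proof -
    have "real (card BHba) \<le> real (card {1..N}) * (real (card {1..N}) * (pH * real (card \<Omega>)))"
      unfolding BHba_def by (intro card_UN_bound) (auto intro!: cBHb)
    also have "\<dots> = (real N * real N * pH) * real (card \<Omega>)" by (simp add: mult_ac)
    also have "\<dots> \<le> 1/180 * real (card \<Omega>)"
      using A6 O0 by (intro mult_right_mono) (auto simp: N_def pH_def)
    finally show ?thesis .
  qed
  define Good where "Good = Opt - BGa - BHaa - BHba"
  have fin_sub: "finite S" if "S \<subseteq> \<Omega>" for S using fO that finite_subset by blast
  have cGood: "real (card Good) \<ge> 13/20 * real (card \<Omega>)"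
  proof -
    have s: "Opt \<subseteq> \<Omega>" "BGa \<subseteq> \<Omega>" "BHaa \<subseteq> \<Omega>" "BHba \<subseteq> \<Omega>"
      by (auto simp: Opt_def BGa_def BG_def BHaa_def BHa_def BHba_def BHb_def)
    have "real (card Good) \<ge> real (card (Opt - BGa - BHaa)) - real (card BHba)"
      unfolding Good_def by (rule card_diff_real) (use s fin_sub in auto)
    moreover have "real (card (Opt - BGa - BHaa)) \<ge> real (card (Opt - BGa)) - real (card BHaa)"
      by (rule card_diff_real) (use s fin_sub in auto)
    moreover have "real (card (Opt - BGa)) \<ge> real (card Opt) - real (card BGa)"
      by (rule card_diff_real) (use s fin_sub in auto)
    ultimately show ?thesis using cOpt cBGa cBHaa cBHba by linarith
  qed
  define GP where "GP i A V = (corr_time \<delta> d TT alg A V i \<le> corr_time \<delta> d TT alg A V (i + 1) \<and>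
                    corr_time \<delta> d TT alg A V (i + 1) \<le> enat TT \<and>
                    real (the_enat (corr_time \<delta> d TT alg A V (i + 1)))
                      - real (the_enat (corr_time \<delta> d TT alg A V i))
                      \<le> 20 * real TT / real (NN \<delta> d))" for i A V
  define I where "I = {1..N - 1}"
  have cI: "card I = N - 1" by (simp add: I_def)
  have perw: "real (card {i\<in>I. GP i (fst \<omega>) (snd \<omega>)}) \<ge> real (N - 1) - real N / 20" if w: "\<omega> \<in> Good" for \<omega>
  proof -
    define A where "A = fst \<omega>"
    define V where "V = snd \<omega>"
    have wO: "\<omega> \<in> \<Omega>" using w by (simp add: Good_def Opt_def)
    have AV: "A \<in> Amats d" "V \<in> Vfams d (NN \<delta> d)" using Omega_mem[of \<omega> \<delta> d] wO by (auto simp: A_def V_def \<Omega>_def)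
    have gw: "(\<forall>i\<in>{1..NN \<delta> d}. corr_time \<delta> d TT alg A V i \<noteq> \<infinity>) \<and>
         (\<forall>i\<in>{1..NN \<delta> d - 1}. corr_time \<delta> d TT alg A V i < corr_time \<delta> d TT alg A V (i+1))"
    proof (rule good_omega[OF d2 N20 g0 A3 A4 T1 valid AV])
      show "eps_optimal_out \<delta> d TT alg A V" using w by (simp add: Good_def Opt_def A_def V_def)
      fix i j t assume "i \<in> {1..NN \<delta> d}" "j \<in> {1..NN \<delta> d}" "t \<in> {1..TT}" "i < j"
      hence "\<omega> \<notin> BG i j t" using w by (auto simp: Good_def BGa_def N_def)
      thus "\<bar>ip d (query alg (fo_oracle \<delta> d A (trunc i V)) t) (V j)\<bar> < gam \<delta> d / 4"
        using wO \<open>i < j\<close> by (auto simp: BG_def A_def V_def \<gamma>_def)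
    next
      fix i assume "i \<in> {1..NN \<delta> d}"
      hence "\<omega> \<notin> BHa i" using w by (auto simp: Good_def BHaa_def N_def)
      thus "(\<Sum>r<length (qsA d A). (ip d (qsA d A ! r) (V i))\<^sup>2) \<le> 3/4"
        using wO by (auto simp: BHa_def A_def V_def)
    next
      fix i j assume "i \<in> {1..NN \<delta> d}" "j \<in> {1..NN \<delta> d}" "i \<noteq> j"
      hence "\<omega> \<notin> BHb i j" using w by (auto simp: Good_def BHba_def N_def)
      thus "\<bar>ip d (V j) (proj d (qsA d A) (V i))\<bar> \<le> 1 / (8 * NN \<delta> d)"
        using wO \<open>i \<noteq> j\<close> by (auto simp: BHb_def A_def V_def N_def)
    qed
    define a where "a i = real (the_enat (corr_time \<delta> d TT alg A V i))" for i
    have mono: "a i \<le> a (i+1)" if "1 \<le> i" "i \<le> N - 1" for i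
    proof -
      have f1: "corr_time \<delta> d TT alg A V i \<noteq> \<infinity>" "corr_time \<delta> d TT alg A V (i+1) \<noteq> \<infinity>"
        using gw that N20 by (auto simp: N_def)
      have "corr_time \<delta> d TT alg A V i < corr_time \<delta> d TT alg A V (i+1)" using gw that by (auto simp: N_def)
      thus ?thesis using f1 by (auto simp: a_def)
    qed
    have aN: "a N \<le> real TT"
    proof -
      have "corr_time \<delta> d TT alg A V N \<noteq> \<infinity>" using gw N20 by (auto simp: N_def)
      moreover hence "corr_time \<delta> d TT alg A V N \<le> enat TT" by (rule corr_time_le)
      ultimately show ?thesis by (auto simp: a_def)
    qed
    have gl: "real (card {i\<in>{1..N-1}. a (i+1) - a i \<le> 20 * real TT / N}) \<ge> real (N - 1) - real N / 20"
      by (rule gaps) (use N20 mono aN T1 in \<open>auto simp: N_def a_def\<close>)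
    have "{i\<in>{1..N-1}. a (i+1) - a i \<le> 20 * real TT / N} \<subseteq> {i\<in>I. GP i (fst \<omega>) (snd \<omega>)}"
    proof
      fix i assume i: "i \<in> {i\<in>{1..N-1}. a (i+1) - a i \<le> 20 * real TT / N}"
      have lt: "corr_time \<delta> d TT alg A V i < corr_time \<delta> d TT alg A V (i+1)" using gw i by (auto simp: N_def)
      have f: "corr_time \<delta> d TT alg A V (i+1) \<noteq> \<infinity>" using gw i N20 by (auto simp: N_def)
      show "i \<in> {i\<in>I. GP i (fst \<omega>) (snd \<omega>)}"
        using lt corr_time_le[OF f] i by (auto simp: I_def GP_def A_def V_def a_def N_def)
    qed
    hence "card {i\<in>{1..N-1}. a (i+1) - a i \<le> 20 * real TT / N} \<le> card {i\<in>I. GP i (fst \<omega>) (snd \<omega>)}"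
      by (intro card_mono) (auto simp: I_def)
    thus ?thesis using gl by linarith
  qed
  show ?thesis
  proof (rule ccontr)
    assume "\<not> ?thesis"
    hence lt: "real (card {\<omega>\<in>\<Omega>. GP i (fst \<omega>) (snd \<omega>)}) < 3/5 * real (card \<Omega>)" if "i \<in> I" for i
      using that O0 by (auto simp: prob_ev_eq GP_def I_def N_def \<Omega>_def not_le field_simps)
    have Ine: "I \<noteq> {}" using N20 by (auto simp: I_def N_def)
    have "(\<Sum>i\<in>I. real (card {\<omega>\<in>\<Omega>. GP i (fst \<omega>) (snd \<omega>)})) < (\<Sum>i\<in>I. 3/5 * real (card \<Omega>))"
      by (rule sum_strict_mono) (use Ine lt in \<open>auto simp: I_def\<close>)
    also have "\<dots> = real (N - 1) * (3/5 * real (card \<Omega>))" by (simp add: cI)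
    finally have up: "(\<Sum>i\<in>I. real (card {\<omega>\<in>\<Omega>. GP i (fst \<omega>) (snd \<omega>)})) < real (N - 1) * (3/5 * real (card \<Omega>))" .
    have "(\<Sum>i\<in>I. real (card {\<omega>\<in>\<Omega>. GP i (fst \<omega>) (snd \<omega>)})) = (\<Sum>\<omega>\<in>\<Omega>. real (card {i\<in>I. GP i (fst \<omega>) (snd \<omega>)}))"
      by (rule double_count) (auto simp: I_def fO)
    also have "\<dots> \<ge> (\<Sum>\<omega>\<in>Good. real (card {i\<in>I. GP i (fst \<omega>) (snd \<omega>)}))"
      by (rule sum_mono2) (auto simp: fO Good_def Opt_def)
    also have "(\<Sum>\<omega>\<in>Good. real (card {i\<in>I. GP i (fst \<omega>) (snd \<omega>)})) \<ge> (\<Sum>\<omega>\<in>Good. real (N - 1) - real N / 20)"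
      by (intro sum_mono perw)
    finally have lo: "(\<Sum>i\<in>I. real (card {\<omega>\<in>\<Omega>. GP i (fst \<omega>) (snd \<omega>)})) \<ge> real (card Good) * (real (N - 1) - real N / 20)"
      by simp
    have N1: "real (N - 1) = real N - 1" using N20 by (simp add: N_def of_nat_diff)
    have pos: "real (N - 1) - real N / 20 \<ge> 0" using N1 N20 by (simp add: N_def)
    have "13/20 * real (card \<Omega>) * (real (N - 1) - real N / 20) \<le> real (card Good) * (real (N - 1) - real N / 20)"
      using cGood pos by (intro mult_right_mono) auto
    hence "13/20 * real (card \<Omega>) * (real (N - 1) - real N / 20) < real (N - 1) * (3/5 * real (card \<Omega>))"
      using lo up by linarith
    hence "13/20 * (real (N - 1) - real N / 20) < real (N - 1) * (3/5)"
      using O0 by (simp add: field_simps)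
    thus False using N1 N20 by (simp add: N_def)
  qed
qed

theorem lemma4p5:
  fixes \<delta> :: real and T :: "nat \<Rightarrow> nat"
  assumes "0 < \<delta>" and "\<delta> < 1"
    and "((\<lambda>d. ln (real (T d)) / ln (real d)) \<longlongrightarrow> 1 + \<delta> / 6) sequentially"
  shows "\<exists>d0. \<forall>d \<ge> d0. even d \<longrightarrow>
           (\<forall>alg. valid_alg d alg \<and>
                  prob_ev \<delta> d (\<lambda>(A, V). eps_optimal_out \<delta> d (T d) alg A V) \<ge> 2 / 3 \<longrightarrow>
              (\<exists>i \<in> {1..NN \<delta> d - 1}.
                 prob_ev \<delta> d (\<lambda>(A, V).
                    corr_time \<delta> d (T d) alg A V i \<le> corr_time \<delta> d (T d) alg A V (i + 1) \<and>
                    corr_time \<delta> d (T d) alg A V (i + 1) \<le> enat (T d) \<and>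
                    real (the_enat (corr_time \<delta> d (T d) alg A V (i + 1)))
                      - real (the_enat (corr_time \<delta> d (T d) alg A V i))
                      \<le> 20 * real (T d) / real (NN \<delta> d)) \<ge> 3 / 5))"
proof -
  obtain d0 where D: "\<forall>d\<ge>d0. 2 \<le> d \<and> 20 \<le> NN \<delta> d \<and> 0 < gam \<delta> d \<and> gam \<delta> d \<le> 1/2
      \<and> real (NN \<delta> d) * gam \<delta> d + sqrt d / (real d)^2 \<le> 1 / (9 * sqrt (NN \<delta> d))
      \<and> sqrt d / (real d)^2 < gam \<delta> d
      \<and> real (NN \<delta> d) * (16 / real d) \<le> 1/180
      \<and> real (NN \<delta> d) * real (NN \<delta> d) * (2 * exp (- real d / (128 * (real (NN \<delta> d))^2))) \<le> 1/180
      \<and> real (NN \<delta> d) * real (NN \<delta> d) * real (T d) * (2 * exp (- real d * (gam \<delta> d)^2 / 32)) \<le> 1/180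
      \<and> 1 \<le> T d"
    using asym[OF assms] by blast
  show ?thesis
  proof (intro exI[of _ d0] allI impI)
    fix d alg assume dd: "d0 \<le> d" and "even d"
      and H: "valid_alg d alg \<and> prob_ev \<delta> d (\<lambda>(A, V). eps_optimal_out \<delta> d (T d) alg A V) \<ge> 2 / 3"
    have Dd: "2 \<le> d \<and> 20 \<le> NN \<delta> d \<and> 0 < gam \<delta> d \<and> gam \<delta> d \<le> 1/2
      \<and> real (NN \<delta> d) * gam \<delta> d + sqrt d / (real d)^2 \<le> 1 / (9 * sqrt (NN \<delta> d))
      \<and> sqrt d / (real d)^2 < gam \<delta> d
      \<and> real (NN \<delta> d) * (16 / real d) \<le> 1/180
      \<and> real (NN \<delta> d) * real (NN \<delta> d) * (2 * exp (- real d / (128 * (real (NN \<delta> d))^2))) \<le> 1/180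
      \<and> real (NN \<delta> d) * real (NN \<delta> d) * real (T d) * (2 * exp (- real d * (gam \<delta> d)^2 / 32)) \<le> 1/180
      \<and> 1 \<le> T d" using D dd by blast
    show "\<exists>i \<in> {1..NN \<delta> d - 1}.
                 prob_ev \<delta> d (\<lambda>(A, V).
                    corr_time \<delta> d (T d) alg A V i \<le> corr_time \<delta> d (T d) alg A V (i + 1) \<and>
                    corr_time \<delta> d (T d) alg A V (i + 1) \<le> enat (T d) \<and>
                    real (the_enat (corr_time \<delta> d (T d) alg A V (i + 1)))
                      - real (the_enat (corr_time \<delta> d (T d) alg A V i))
                      \<le> 20 * real (T d) / real (NN \<delta> d)) \<ge> 3 / 5"
      by (rule main_d) (use Dd H in auto)
  qed
qed

end
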